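(* Consider the following single machine scheduling problem. A set $N = N_1 \cup N_2$ of $n$ jobs ($N_1\cap N_2=\emptyset$) is to be processed on a single machine from time $0$ on, the machine processing at most one job at a time, without preemption. Each job $j$ has processing time $p_j = p$ (the same value $p>0$ for all jobs), a release date $r_j > 0$ (job $j$ cannot start before $r_j$), a due date $d_j$ and a weight $w_j \ge 0$. The jobs of $N_1 = \{j^1_1,\dots,j^1_{n_1}\}$ form a chain $j^1_1 \to j^1_2 \to \dots \to j^1_{n_1}$ and the jobs of $N_2=\{i_1,\dots,i_{n_2}\}$ form a chain $i_1\to i_2\to\dots\to i_{n_2}$, where $j \to i$ means job $j$ must be processed before job $i$. For a feasible schedule, let $C_j$ be the completion time of job $j$ and $T_j=\max\{0, C_j - d_j\}$ its tardiness. Then, for each of the objectives $f = \sum_{j\in N} w_j C_j$ and $f = \sum_{j\in N} w_j T_j$, the problem of finding a feasible schedule minimizing $f$ (denoted $1|2\ chains, p_j=p, r_j|f$) can be solved by a dynamic programming algorithm in $O(n^5)$ time.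
   Context: Schedules are given by a permutation of the jobs respecting both chains; each job starts at the maximum of its release date and the completion time of the previous job in the permutation. *)

theory Defs
  imports Main "HOL.Real"
begin

text \<open>An instance: chain 1 consists of jobs J1 0, ..., J1 (n1-1) (in chain order),
  chain 2 of jobs J2 0, ..., J2 (n2-1). Common processing time pt.\<close>

record inst =
  n1 :: nat
  n2 :: nat
  pt :: real
  r1 :: "nat \<Rightarrow> real"
  d1 :: "nat \<Rightarrow> real"
  w1 :: "nat \<Rightarrow> real"
  r2 :: "nat \<Rightarrow> real"
  d2 :: "nat \<Rightarrow> real"
  w2 :: "nat \<Rightarrow> real"

datatype job = J1 nat | J2 nat

fun rel :: "inst \<Rightarrow> job \<Rightarrow> real" where
  "rel I (J1 k) = r1 I k" | "rel I (J2 k) = r2 I k"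
fun due :: "inst \<Rightarrow> job \<Rightarrow> real" where
  "due I (J1 k) = d1 I k" | "due I (J2 k) = d2 I k"
fun wt :: "inst \<Rightarrow> job \<Rightarrow> real" where
  "wt I (J1 k) = w1 I k" | "wt I (J2 k) = w2 I k"

definition jobs :: "inst \<Rightarrow> job set" where
  "jobs I = {J1 k | k. k < n1 I} \<union> {J2 k | k. k < n2 I}"

definition admissible :: "inst \<Rightarrow> bool" where
  "admissible I \<longleftrightarrow> pt I > 0
     \<and> (\<forall>k < n1 I. r1 I k > 0 \<and> w1 I k \<ge> 0)
     \<and> (\<forall>k < n2 I. r2 I k > 0 \<and> w2 I k \<ge> 0)"

definition valid_seq :: "inst \<Rightarrow> job list \<Rightarrow> bool" where
  "valid_seq I \<pi> \<longleftrightarrow> distinct \<pi> \<and> set \<pi> = jobs I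
     \<and> (\<forall>a b. a < b \<and> b < n1 I \<longrightarrow> (\<exists>i j. i < j \<and> j < length \<pi> \<and> \<pi> ! i = J1 a \<and> \<pi> ! j = J1 b))
     \<and> (\<forall>a b. a < b \<and> b < n2 I \<longrightarrow> (\<exists>i j. i < j \<and> j < length \<pi> \<and> \<pi> ! i = J2 a \<and> \<pi> ! j = J2 b))"

fun ctimes :: "inst \<Rightarrow> real \<Rightarrow> job list \<Rightarrow> real list" where
  "ctimes I t [] = []"
| "ctimes I t (j # js) = (let C = max t (rel I j) + pt I in C # ctimes I C js)"

datatype objective = WeightedCompletion | WeightedTardiness

fun cost :: "objective \<Rightarrow> inst \<Rightarrow> job \<Rightarrow> real \<Rightarrow> real" where
  "cost WeightedCompletion I j C = wt I j * C"
| "cost WeightedTardiness I j C = wt I j * max 0 (C - due I j)"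

definition obj_val :: "objective \<Rightarrow> inst \<Rightarrow> job list \<Rightarrow> real" where
  "obj_val ob I \<pi> = (\<Sum>(j, C) \<leftarrow> zip \<pi> (ctimes I 0 \<pi>). cost ob I j C)"

definition optimal_seq :: "objective \<Rightarrow> inst \<Rightarrow> job list \<Rightarrow> bool" where
  "optimal_seq ob I \<pi> \<longleftrightarrow> valid_seq I \<pi>
     \<and> (\<forall>\<sigma>. valid_seq I \<sigma> \<longrightarrow> obj_val ob I \<pi> \<le> obj_val ob I \<sigma>)"

type_synonym mem = "nat \<Rightarrow> real"

datatype expr = Const int | Ld expr | Add expr expr | Sub expr expr | Mul expr expr
datatype bexp = Less expr expr | Eq expr expr | BNot bexp | And bexp bexp
datatype com = Skip | Store expr expr | Seq com com | If bexp com com | While bexp com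

fun eval :: "expr \<Rightarrow> mem \<Rightarrow> real option" where
  "eval (Const i) m = Some (of_int i)"
| "eval (Ld e) m = (case eval e m of None \<Rightarrow> None
     | Some v \<Rightarrow> if v \<in> \<nat> then Some (m (nat \<lfloor>v\<rfloor>)) else None)"
| "eval (Add a b) m = (case (eval a m, eval b m) of (Some x, Some y) \<Rightarrow> Some (x + y) | _ \<Rightarrow> None)"
| "eval (Sub a b) m = (case (eval a m, eval b m) of (Some x, Some y) \<Rightarrow> Some (x - y) | _ \<Rightarrow> None)"
| "eval (Mul a b) m = (case (eval a m, eval b m) of (Some x, Some y) \<Rightarrow> Some (x * y) | _ \<Rightarrow> None)"

fun beval :: "bexp \<Rightarrow> mem \<Rightarrow> bool option" where
  "beval (Less a b) m = (case (eval a m, eval b m) of (Some x, Some y) \<Rightarrow> Some (x < y) | _ \<Rightarrow> None)"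
| "beval (Eq a b) m = (case (eval a m, eval b m) of (Some x, Some y) \<Rightarrow> Some (x = y) | _ \<Rightarrow> None)"
| "beval (BNot b) m = map_option Not (beval b m)"
| "beval (And a b) m = (case (beval a m, beval b m) of (Some x, Some y) \<Rightarrow> Some (x \<and> y) | _ \<Rightarrow> None)"

inductive exec :: "com \<Rightarrow> mem \<Rightarrow> nat \<Rightarrow> mem \<Rightarrow> bool" where
  ExSkip: "exec Skip m 1 m"
| ExStore: "\<lbrakk>eval a m = Some va; va \<in> \<nat>; eval e m = Some v\<rbrakk>
     \<Longrightarrow> exec (Store a e) m 1 (m(nat \<lfloor>va\<rfloor> := v))"
| ExSeq: "\<lbrakk>exec c1 m k1 m1; exec c2 m1 k2 m2\<rbrakk> \<Longrightarrow> exec (Seq c1 c2) m (k1 + k2) m2"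
| ExIfT: "\<lbrakk>beval b m = Some True; exec c1 m k m'\<rbrakk> \<Longrightarrow> exec (If b c1 c2) m (k + 1) m'"
| ExIfF: "\<lbrakk>beval b m = Some False; exec c2 m k m'\<rbrakk> \<Longrightarrow> exec (If b c1 c2) m (k + 1) m'"
| ExWhileF: "beval b m = Some False \<Longrightarrow> exec (While b c) m 1 m"
| ExWhileT: "\<lbrakk>beval b m = Some True; exec c m k1 m1; exec (While b c) m1 k2 m2\<rbrakk>
     \<Longrightarrow> exec (While b c) m (k1 + k2 + 1) m2"

text \<open>Input encoding: cell 0 = n1, cell 1 = n2, cell 2 = p; then for chain 1 (in chain
  order) the triples (r, d, w) starting at cell 3, then the triples of chain 2; all other
  cells are 0.\<close>
definition input_mem :: "inst \<Rightarrow> mem" where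
  "input_mem I a =
    (if a = 0 then real (n1 I)
     else if a = 1 then real (n2 I)
     else if a = 2 then pt I
     else if a < 3 + 3 * n1 I then
       (let k = (a - 3) div 3 in
        if (a - 3) mod 3 = 0 then r1 I k else if (a - 3) mod 3 = 1 then d1 I k else w1 I k)
     else if a < 3 + 3 * n1 I + 3 * n2 I then
       (let b = a - 3 - 3 * n1 I; k = b div 3 in
        if b mod 3 = 0 then r2 I k else if b mod 3 = 1 then d2 I k else w2 I k)
     else 0)"

fun enc_job :: "job \<Rightarrow> real" where
  "enc_job (J1 k) = real k + 1"
| "enc_job (J2 k) = - (real k + 1)"

end

theory Submission
  imports Defs
begin

definition NN :: "inst \<Rightarrow> nat" where "NN I = n1 I + n2 I + 1"

definition tm :: "inst \<Rightarrow> nat \<Rightarrow> nat \<Rightarrow> real" where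
  "tm I k l = (if k = 0 then 0 else input_mem I (3*k)) + real l * pt I"

definition nxt :: "inst \<Rightarrow> nat \<Rightarrow> nat \<Rightarrow> nat \<Rightarrow> nat \<times> nat" where
  "nxt I kx k l = (if tm I k l < input_mem I (3*kx) then (kx, 1) else (k, l+1))"

definition costk :: "objective \<Rightarrow> inst \<Rightarrow> nat \<Rightarrow> real \<Rightarrow> real" where
  "costk ob I kx S = (case ob of WeightedCompletion \<Rightarrow> input_mem I (3*kx+2) * S
     | WeightedTardiness \<Rightarrow> (if input_mem I (3*kx+1) < S then input_mem I (3*kx+2) * (S - input_mem I (3*kx+1)) else 0))"

function V :: "objective \<Rightarrow> inst \<Rightarrow> nat \<Rightarrow> nat \<Rightarrow> nat \<Rightarrow> nat \<Rightarrow> real" where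
  "V ob I i j k l = (if l + 1 < NN I then
     (if i < n1 I then
        (if j < n2 I then
           (if costk ob I (n1 I+j+1) (tm I (fst (nxt I (n1 I+j+1) k l)) (snd (nxt I (n1 I+j+1) k l)))
               + V ob I i (j+1) (fst (nxt I (n1 I+j+1) k l)) (snd (nxt I (n1 I+j+1) k l))
             < costk ob I (i+1) (tm I (fst (nxt I (i+1) k l)) (snd (nxt I (i+1) k l)))
               + V ob I (i+1) j (fst (nxt I (i+1) k l)) (snd (nxt I (i+1) k l))
            then costk ob I (n1 I+j+1) (tm I (fst (nxt I (n1 I+j+1) k l)) (snd (nxt I (n1 I+j+1) k l)))
               + V ob I i (j+1) (fst (nxt I (n1 I+j+1) k l)) (snd (nxt I (n1 I+j+1) k l))
            else costk ob I (i+1) (tm I (fst (nxt I (i+1) k l)) (snd (nxt I (i+1) k l)))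
               + V ob I (i+1) j (fst (nxt I (i+1) k l)) (snd (nxt I (i+1) k l)))
         else costk ob I (i+1) (tm I (fst (nxt I (i+1) k l)) (snd (nxt I (i+1) k l)))
               + V ob I (i+1) j (fst (nxt I (i+1) k l)) (snd (nxt I (i+1) k l)))
      else (if j < n2 I then costk ob I (n1 I+j+1) (tm I (fst (nxt I (n1 I+j+1) k l)) (snd (nxt I (n1 I+j+1) k l)))
               + V ob I i (j+1) (fst (nxt I (n1 I+j+1) k l)) (snd (nxt I (n1 I+j+1) k l)) else 0))
    else 0)"
  by pat_completeness auto
termination by (relation "measure (\<lambda>(ob,I,i,j,k,l). (n1 I - i) + (n2 I - j))") auto

definition tr :: "objective \<Rightarrow> inst \<Rightarrow> nat \<Rightarrow> nat \<Rightarrow> nat \<Rightarrow> nat \<Rightarrow> nat \<Rightarrow> real" where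
  "tr ob I kx i' j' k l = costk ob I kx (tm I (fst (nxt I kx k l)) (snd (nxt I kx k l)))
     + V ob I i' j' (fst (nxt I kx k l)) (snd (nxt I kx k l))"

definition Vb :: "objective \<Rightarrow> inst \<Rightarrow> nat \<Rightarrow> nat \<Rightarrow> nat \<Rightarrow> nat \<Rightarrow> real" where
  "Vb ob I i j k l = (if j < n2 I \<and> (\<not> i < n1 I \<or> tr ob I (n1 I+j+1) i (j+1) k l < tr ob I (i+1) (i+1) j k l)
      then tr ob I (n1 I+j+1) i (j+1) k l else if i < n1 I then tr ob I (i+1) (i+1) j k l else 0)"

lemma V_eq: "V ob I i j k l = (if l + 1 < NN I then Vb ob I i j k l else 0)"
  unfolding Vb_def tr_def by (subst V.simps) auto

declare V.simps[simp del]

function gen :: "objective \<Rightarrow> inst \<Rightarrow> nat \<Rightarrow> nat \<Rightarrow> nat \<Rightarrow> nat \<Rightarrow> job list" where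
  "gen ob I i j k l = (if j < n2 I \<and> (\<not> i < n1 I \<or> tr ob I (n1 I+j+1) i (j+1) k l < tr ob I (i+1) (i+1) j k l)
      then J2 j # gen ob I i (j+1) (fst (nxt I (n1 I+j+1) k l)) (snd (nxt I (n1 I+j+1) k l))
      else if i < n1 I then J1 i # gen ob I (i+1) j (fst (nxt I (i+1) k l)) (snd (nxt I (i+1) k l)) else [])"
  by pat_completeness auto
termination by (relation "measure (\<lambda>(ob,I,i,j,k,l). (n1 I - i) + (n2 I - j))") auto

declare gen.simps[simp del]

fun costL :: "objective \<Rightarrow> inst \<Rightarrow> real \<Rightarrow> job list \<Rightarrow> real" where
  "costL ob I t [] = 0"
| "costL ob I t (x # xs) = cost ob I x (max t (rel I x) + pt I) + costL ob I (max t (rel I x) + pt I) xs"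

lemma costL_obj: "costL ob I t xs = (\<Sum>(j, C) \<leftarrow> zip xs (ctimes I t xs). cost ob I j C)"
  by (induction xs arbitrary: t) (auto simp: Let_def)

lemma inp1: assumes "i < n1 I" shows "input_mem I (3*(i+1)) = r1 I i \<and> input_mem I (3*(i+1)+1) = d1 I i \<and> input_mem I (3*(i+1)+2) = w1 I i"
proof -
  have b: "(3*i) div 3 = i" "(3*i+1) div 3 = i" "(3*i+2) div 3 = i" "(3*i) mod 3 = 0" "(3*i+1) mod 3 = 1" "(3*i+2) mod 3 = 2" by presburger+
  have a: "3*(i+1) - 3 = 3*i" "3*(i+1)+1-3 = 3*i+1" "3*(i+1)+2-3 = 3*i+2" by simp_all
  show ?thesis using assms unfolding input_mem_def Let_def a b by simp
qed
lemma inp2: assumes "j < n2 I" shows "input_mem I (3*(n1 I+j+1)) = r2 I j \<and> input_mem I (3*(n1 I+j+1)+1) = d2 I j \<and> input_mem I (3*(n1 I+j+1)+2) = w2 I j"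
proof -
  have b: "(3*j) div 3 = j" "(3*j+1) div 3 = j" "(3*j+2) div 3 = j" "(3*j) mod 3 = 0" "(3*j+1) mod 3 = 1" "(3*j+2) mod 3 = 2" by presburger+
  have a: "3*(n1 I+j+1) - 3 - 3 * n1 I = 3*j" "3*(n1 I+j+1)+1-3 - 3 * n1 I = 3*j+1" "3*(n1 I+j+1)+2-3 - 3 * n1 I = 3*j+2" by simp_all
  show ?thesis using assms unfolding input_mem_def Let_def a b by simp
qed

lemma tm_nxt: "0 < kx \<Longrightarrow> max (tm I k l) (input_mem I (3*kx)) + pt I = tm I (fst (nxt I kx k l)) (snd (nxt I kx k l))"
  by (auto simp: nxt_def tm_def algebra_simps)

lemma cost1: "i < n1 I \<Longrightarrow> cost ob I (J1 i) C = costk ob I (i+1) C"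
  using inp1[of i I] by (cases ob) (auto simp: costk_def)

lemma cost2: "j < n2 I \<Longrightarrow> cost ob I (J2 j) C = costk ob I (n1 I+j+1) C"
  using inp2[of j I] by (cases ob) (auto simp: costk_def)

lemma step1: "i < n1 I \<Longrightarrow> cost ob I (J1 i) (max (tm I k l) (rel I (J1 i)) + pt I) + costL ob I (max (tm I k l) (rel I (J1 i)) + pt I) xs
   = costk ob I (i+1) (tm I (fst (nxt I (i+1) k l)) (snd (nxt I (i+1) k l))) + costL ob I (tm I (fst (nxt I (i+1) k l)) (snd (nxt I (i+1) k l))) xs"
  using inp1[of i I] tm_nxt[where I=I and k=k and l=l and kx="i+1"] cost1[of i I ob] by simp

lemma step2: "j < n2 I \<Longrightarrow> cost ob I (J2 j) (max (tm I k l) (rel I (J2 j)) + pt I) + costL ob I (max (tm I k l) (rel I (J2 j)) + pt I) xs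
   = costk ob I (n1 I+j+1) (tm I (fst (nxt I (n1 I+j+1) k l)) (snd (nxt I (n1 I+j+1) k l))) + costL ob I (tm I (fst (nxt I (n1 I+j+1) k l)) (snd (nxt I (n1 I+j+1) k l))) xs"
  using inp2[of j I] tm_nxt[where I=I and k=k and l=l and kx="n1 I+j+1"] cost2[of j I ob] by simp

lemma snd_nxt: "snd (nxt I kx k l) \<le> l + 1" by (simp add: nxt_def)

fun isJ1 :: "job \<Rightarrow> bool" where "isJ1 (J1 _) = True" | "isJ1 (J2 _) = False"

definition vsuf :: "inst \<Rightarrow> nat \<Rightarrow> nat \<Rightarrow> job list \<Rightarrow> bool" where
  "vsuf I i j xs \<longleftrightarrow> filter isJ1 xs = map J1 [i..<n1 I] \<and> filter (Not \<circ> isJ1) xs = map J2 [j..<n2 I]"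

lemma vsuf_Nil: "vsuf I i j [] \<Longrightarrow> \<not> i < n1 I \<and> \<not> j < n2 I"
  by (auto simp: vsuf_def)

lemma vsuf_J1: "vsuf I i j (J1 a # xs) \<Longrightarrow> a = i \<and> i < n1 I \<and> vsuf I (i+1) j xs"
  by (auto simp: vsuf_def upt_eq_Cons_conv)

lemma vsuf_J2: "vsuf I i j (J2 a # xs) \<Longrightarrow> a = j \<and> j < n2 I \<and> vsuf I i (j+1) xs"
  by (auto simp: vsuf_def upt_eq_Cons_conv)

lemma lower: "vsuf I i j xs \<Longrightarrow> l \<le> i + j \<Longrightarrow> i \<le> n1 I \<Longrightarrow> j \<le> n2 I \<Longrightarrow> V ob I i j k l \<le> costL ob I (tm I k l) xs"
proof (induction xs arbitrary: i j k l)
  case Nil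
  then show ?case using vsuf_Nil[OF Nil(1)] by (simp add: V_eq Vb_def)
next
  case (Cons x xs)
  show ?case
  proof (cases x)
    case (J1 a)
    with vsuf_J1 Cons.prems have h: "a = i" "i < n1 I" "vsuf I (i+1) j xs" by auto
    have g: "l + 1 < NN I" using Cons.prems h by (simp add: NN_def)
    have "V ob I i j k l \<le> tr ob I (i+1) (i+1) j k l" using g h by (simp add: V_eq Vb_def)
    also have "\<dots> \<le> costL ob I (tm I k l) (x # xs)"
      unfolding tr_def using J1 h step1[of i I ob k l xs] Cons.IH[OF h(3), of "snd (nxt I (i+1) k l)" "fst (nxt I (i+1) k l)"]
        snd_nxt[of I "i+1" k l] Cons.prems by simp
    finally show ?thesis .
  next
    case (J2 a)
    with vsuf_J2 Cons.prems have h: "a = j" "j < n2 I" "vsuf I i (j+1) xs" by auto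
    have g: "l + 1 < NN I" using Cons.prems h by (simp add: NN_def)
    have "V ob I i j k l \<le> tr ob I (n1 I+j+1) i (j+1) k l" using g h by (simp add: V_eq Vb_def)
    also have "\<dots> \<le> costL ob I (tm I k l) (x # xs)"
      unfolding tr_def using J2 h step2[of j I ob k l xs] Cons.IH[OF h(3), of "snd (nxt I (n1 I+j+1) k l)" "fst (nxt I (n1 I+j+1) k l)"]
        snd_nxt[of I "n1 I+j+1" k l] Cons.prems by simp
    finally show ?thesis .
  qed
qed

lemma upper: "l \<le> i + j \<Longrightarrow> i \<le> n1 I \<Longrightarrow> j \<le> n2 I \<Longrightarrow>
   vsuf I i j (gen ob I i j k l) \<and> costL ob I (tm I k l) (gen ob I i j k l) = V ob I i j k l"
proof (induction ob I i j k l rule: gen.induct)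
  case (1 ob I i j k l)
  show ?case
  proof (cases "j < n2 I \<and> (\<not> i < n1 I \<or> tr ob I (n1 I+j+1) i (j+1) k l < tr ob I (i+1) (i+1) j k l)")
    case True
    have g: "l + 1 < NN I" using 1 True by (simp add: NN_def)
    have e: "gen ob I i j k l = J2 j # gen ob I i (j+1) (fst (nxt I (n1 I+j+1) k l)) (snd (nxt I (n1 I+j+1) k l))"
      using True by (subst gen.simps) simp
    have IH: "vsuf I i (j+1) (gen ob I i (j+1) (fst (nxt I (n1 I+j+1) k l)) (snd (nxt I (n1 I+j+1) k l))) \<and>
      costL ob I (tm I (fst (nxt I (n1 I+j+1) k l)) (snd (nxt I (n1 I+j+1) k l))) (gen ob I i (j+1) (fst (nxt I (n1 I+j+1) k l)) (snd (nxt I (n1 I+j+1) k l)))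
       = V ob I i (j+1) (fst (nxt I (n1 I+j+1) k l)) (snd (nxt I (n1 I+j+1) k l))"
      using 1 True snd_nxt[of I "n1 I+j+1" k l] by simp
    have v: "V ob I i j k l = tr ob I (n1 I+j+1) i (j+1) k l" using g True by (simp add: V_eq Vb_def)
    have c: "costL ob I (tm I k l) (gen ob I i j k l) = tr ob I (n1 I+j+1) i (j+1) k l"
      using e IH True step2[of j I ob k l] by (simp add: tr_def)
    have s: "vsuf I i j (gen ob I i j k l)" using e IH True by (simp add: vsuf_def upt_conv_Cons)
    show ?thesis using v c s by simp
  next
    case False
    note F = False
    show ?thesis
    proof (cases "i < n1 I")
      case True
      have g: "l + 1 < NN I" using 1 True by (simp add: NN_def)
      have e: "gen ob I i j k l = J1 i # gen ob I (i+1) j (fst (nxt I (i+1) k l)) (snd (nxt I (i+1) k l))"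
        using True F by (subst gen.simps) simp
      have IH: "vsuf I (i+1) j (gen ob I (i+1) j (fst (nxt I (i+1) k l)) (snd (nxt I (i+1) k l))) \<and>
        costL ob I (tm I (fst (nxt I (i+1) k l)) (snd (nxt I (i+1) k l))) (gen ob I (i+1) j (fst (nxt I (i+1) k l)) (snd (nxt I (i+1) k l)))
         = V ob I (i+1) j (fst (nxt I (i+1) k l)) (snd (nxt I (i+1) k l))"
        using 1(2) F True 1(3-) snd_nxt[of I "i+1" k l] by simp
      have v: "V ob I i j k l = tr ob I (i+1) (i+1) j k l" using g True F by (simp add: V_eq Vb_def)
      have c: "costL ob I (tm I k l) (gen ob I i j k l) = tr ob I (i+1) (i+1) j k l"
        using e IH True step1[of i I ob k l] by (simp add: tr_def)
      have s: "vsuf I i j (gen ob I i j k l)" using e IH True by (simp add: vsuf_def upt_conv_Cons)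
      show ?thesis using v c s by simp
    next
      case False
      then have "gen ob I i j k l = []" using F by (subst gen.simps) simp
      then show ?thesis using False F 1(3-) by (auto simp: V_eq Vb_def vsuf_def)
    qed
  qed
qed

definition before :: "job list \<Rightarrow> job \<Rightarrow> job \<Rightarrow> bool" where
  "before xs x y \<longleftrightarrow> (\<exists>i j. i < j \<and> j < length xs \<and> xs ! i = x \<and> xs ! j = y)"

fun unJ :: "job \<Rightarrow> nat" where "unJ (J1 a) = a" | "unJ (J2 a) = a"

lemma before_tl: assumes "distinct (x # xs)" "before (x # xs) u v" "u \<in> set xs"
  shows "before xs u v"
proof -
  from assms(2) obtain i j where h: "i < j" "j < length (x#xs)" "(x#xs) ! i = u" "(x#xs) ! j = v"
    unfolding before_def by blast
  have "i \<noteq> 0"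
  proof
    assume "i = 0"
    then have "u = x" using h by simp
    then show False using assms(1,3) by simp
  qed
  then show ?thesis unfolding before_def using h
    by (intro exI[of _ "i - 1"] exI[of _ "j - 1"]) (auto simp: nth_Cons')
qed

lemma before_hd: assumes "distinct (x # xs)" "before (x # xs) u x" shows False
proof -
  from assms(2) obtain i j where h: "i < j" "j < length (x#xs)" "(x#xs) ! i = u" "(x#xs) ! j = x"
    unfolding before_def by blast
  then have "xs ! (j - 1) = x" "j - 1 < length xs" by (auto simp: nth_Cons')
  then show False using assms(1) by (metis distinct.simps(2) nth_mem)
qed

lemma sortedF:
  assumes "distinct xs" "inj C" "\<And>a. unJ (C a) = a" "\<And>x. P x \<longleftrightarrow> x \<in> range C"
    "\<And>a b. a < b \<Longrightarrow> C a \<in> set xs \<Longrightarrow> C b \<in> set xs \<Longrightarrow> before xs (C a) (C b)"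
  shows "sorted_wrt (<) (map unJ (filter P xs))"
  using assms(1,5)
proof (induction xs)
  case Nil
  then show ?case by simp
next
  case (Cons x xs)
  have IH: "sorted_wrt (<) (map unJ (filter P xs))"
    using Cons.prems by (intro Cons.IH) (auto intro: before_tl)
  show ?case
  proof (cases "P x")
    case True
    then obtain c where c: "x = C c" using assms(4) by auto
    have "\<forall>y\<in>set (map unJ (filter P xs)). c < y"
    proof
      fix y assume "y \<in> set (map unJ (filter P xs))"
      then obtain z where z: "z \<in> set xs" "P z" "y = unJ z" by auto
      then obtain b where b: "z = C b" using assms(4) by auto
      have yb: "y = b" using z b assms(3) by simp
      have "b \<noteq> c" using Cons.prems(1) z b c by auto
      moreover have "\<not> b < c"
      proof
        assume "b < c"
        then have "before (x # xs) (C b) (C c)" using Cons.prems(2)[of b c] z b c by auto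
        then show False using before_hd Cons.prems(1) c by blast
      qed
      ultimately show "c < y" using yb by simp
    qed
    then show ?thesis using IH True c assms(3) by simp
  next
    case False
    then show ?thesis using IH by simp
  qed
qed

lemma filter_eq:
  assumes "distinct xs" "inj C" "\<And>a. unJ (C a) = a" "\<And>x. P x \<longleftrightarrow> x \<in> range C"
    "\<And>a b. a < b \<Longrightarrow> C a \<in> set xs \<Longrightarrow> C b \<in> set xs \<Longrightarrow> before xs (C a) (C b)"
    "{x \<in> set xs. P x} = C ` {0..<n}"
  shows "filter P xs = map C [0..<n]"
proof -
  let ?ys = "map unJ (filter P xs)"
  have s: "sorted_wrt (<) ?ys" using sortedF[OF assms(1-5)] .
  have st: "set ?ys = {0..<n}" using assms(6) assms(3) by (auto simp: image_image)
  have "sorted ?ys" "distinct ?ys" using s strict_sorted_iff by blast+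
  then have "sorted_list_of_set (set ?ys) = ?ys" by (rule sorted_list_of_set.idem_if_sorted_distinct)
  then have ys: "?ys = [0..<n]" unfolding st by simp
  have "map (C \<circ> unJ) (filter P xs) = filter P xs"
    by (rule map_idI) (use assms(3,4) in auto)
  then have "map C ?ys = filter P xs" by simp
  then show ?thesis using ys by simp
qed

lemma isJ1_iff: "isJ1 x \<longleftrightarrow> x \<in> range J1" by (cases x) auto
lemma isJ2_iff: "(Not \<circ> isJ1) x \<longleftrightarrow> x \<in> range J2" by (cases x) auto

lemma valid_vsuf: assumes "valid_seq I xs" shows "vsuf I 0 0 xs"
proof -
  have d: "distinct xs" and st: "set xs = jobs I" using assms by (auto simp: valid_seq_def)
  have o1: "\<And>a b. a < b \<Longrightarrow> J1 a \<in> set xs \<Longrightarrow> J1 b \<in> set xs \<Longrightarrow> before xs (J1 a) (J1 b)"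
    using assms st unfolding valid_seq_def before_def jobs_def by blast
  have o2: "\<And>a b. a < b \<Longrightarrow> J2 a \<in> set xs \<Longrightarrow> J2 b \<in> set xs \<Longrightarrow> before xs (J2 a) (J2 b)"
    using assms st unfolding valid_seq_def before_def jobs_def by blast
  have s1: "{x \<in> set xs. isJ1 x} = J1 ` {0..<n1 I}" using st unfolding jobs_def by (auto simp: isJ1_iff)
  have s2: "{x \<in> set xs. (Not \<circ> isJ1) x} = J2 ` {0..<n2 I}" using st unfolding jobs_def by (auto simp: isJ2_iff)
  show ?thesis unfolding vsuf_def
    using filter_eq[OF d _ _ isJ1_iff o1 s1] filter_eq[OF d _ _ isJ2_iff o2 s2]
    by (simp add: inj_def o_def)
qed

lemma distinct_filters: "distinct (filter P xs) \<Longrightarrow> distinct (filter (Not \<circ> P) xs) \<Longrightarrow> distinct xs"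
  by (induction xs) (auto split: if_splits)

lemma vsuf_before1: "vsuf I i j xs \<Longrightarrow> i \<le> a \<Longrightarrow> a < b \<Longrightarrow> b < n1 I \<Longrightarrow> before xs (J1 a) (J1 b)"
proof (induction xs arbitrary: i j)
  case Nil
  then show ?case using vsuf_Nil by fastforce
next
  case (Cons x xs)
  show ?case
  proof (cases x)
    case (J1 c)
    with vsuf_J1 Cons.prems have h: "c = i" "i < n1 I" "vsuf I (i+1) j xs" by auto
    show ?thesis
    proof (cases "a = i")
      case True
      have "J1 b \<in> set (filter isJ1 xs)" using h(3) Cons.prems unfolding vsuf_def by auto
      then obtain q where "q < length xs" "xs ! q = J1 b" by (auto simp: in_set_conv_nth)
      then show ?thesis unfolding before_def using True J1 h
        by (intro exI[of _ 0] exI[of _ "q+1"]) auto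
    next
      case False
      then have "before xs (J1 a) (J1 b)" using Cons h by simp
      then show ?thesis unfolding before_def
        by (metis Suc_less_eq length_Cons nth_Cons_Suc)
    qed
  next
    case (J2 c)
    with vsuf_J2 Cons.prems have h: "vsuf I i (j+1) xs" by auto
    then have "before xs (J1 a) (J1 b)" using Cons by simp
    then show ?thesis unfolding before_def
      by (metis Suc_less_eq length_Cons nth_Cons_Suc)
  qed
qed

lemma vsuf_before2: "vsuf I i j xs \<Longrightarrow> j \<le> a \<Longrightarrow> a < b \<Longrightarrow> b < n2 I \<Longrightarrow> before xs (J2 a) (J2 b)"
proof (induction xs arbitrary: i j)
  case Nil
  then show ?case using vsuf_Nil by fastforce
next
  case (Cons x xs)
  show ?case
  proof (cases x)
    case (J2 c)
    with vsuf_J2 Cons.prems have h: "c = j" "j < n2 I" "vsuf I i (j+1) xs" by auto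
    show ?thesis
    proof (cases "a = j")
      case True
      have "J2 b \<in> set (filter (Not \<circ> isJ1) xs)" using h(3) Cons.prems unfolding vsuf_def by auto
      then obtain q where "q < length xs" "xs ! q = J2 b" by (auto simp: in_set_conv_nth)
      then show ?thesis unfolding before_def using True J2 h
        by (intro exI[of _ 0] exI[of _ "q+1"]) auto
    next
      case False
      then have "before xs (J2 a) (J2 b)" using Cons h by simp
      then show ?thesis unfolding before_def
        by (metis Suc_less_eq length_Cons nth_Cons_Suc)
    qed
  next
    case (J1 c)
    with vsuf_J1 Cons.prems have h: "vsuf I (i+1) j xs" by auto
    then have "before xs (J2 a) (J2 b)" using Cons by simp
    then show ?thesis unfolding before_def
      by (metis Suc_less_eq length_Cons nth_Cons_Suc)
  qed
qed

lemma vsuf_valid: assumes "vsuf I 0 0 xs" shows "valid_seq I xs"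
proof -
  have f1: "filter isJ1 xs = map J1 [0..<n1 I]" and f2: "filter (Not \<circ> isJ1) xs = map J2 [0..<n2 I]"
    using assms by (auto simp: vsuf_def)
  have d: "distinct xs" by (rule distinct_filters[of isJ1]) (simp_all add: f1 f2 distinct_map inj_on_def)
  have "set xs = set (filter isJ1 xs) \<union> set (filter (Not \<circ> isJ1) xs)" by auto
  also have "\<dots> = jobs I" unfolding f1 f2 jobs_def by auto
  finally have st: "set xs = jobs I" .
  show ?thesis unfolding valid_seq_def
    using d st vsuf_before1[OF assms] vsuf_before2[OF assms] unfolding before_def by auto
qed

lemma gen_optimal: "optimal_seq ob I (gen ob I 0 0 0 0)"
proof -
  have u: "vsuf I 0 0 (gen ob I 0 0 0 0)" "costL ob I (tm I 0 0) (gen ob I 0 0 0 0) = V ob I 0 0 0 0"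
    using upper[of 0 0 0 I ob 0] by auto
  have t0: "tm I 0 0 = 0" by (simp add: tm_def)
  show ?thesis unfolding optimal_seq_def
  proof (intro conjI allI impI)
    show "valid_seq I (gen ob I 0 0 0 0)" using vsuf_valid u by blast
    fix \<sigma> assume "valid_seq I \<sigma>"
    then have "V ob I 0 0 0 0 \<le> costL ob I (tm I 0 0) \<sigma>" using lower valid_vsuf by fastforce
    then show "obj_val ob I (gen ob I 0 0 0 0) \<le> obj_val ob I \<sigma>"
      using u t0 by (simp add: obj_val_def costL_obj)
  qed
qed

fun run :: "com \<Rightarrow> mem \<Rightarrow> (nat \<times> mem) option" where
  "run Skip m = Some (1, m)"
| "run (Store a e) m = (case (eval a m, eval e m) of (Some va, Some v) \<Rightarrow>
      if va \<in> \<nat> then Some (1, m(nat \<lfloor>va\<rfloor> := v)) else None | _ \<Rightarrow> None)"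
| "run (Seq c1 c2) m = (case run c1 m of None \<Rightarrow> None | Some (k1, m1) \<Rightarrow>
      (case run c2 m1 of None \<Rightarrow> None | Some (k2, m2) \<Rightarrow> Some (k1 + k2, m2)))"
| "run (If b c1 c2) m = (case beval b m of None \<Rightarrow> None
      | Some True \<Rightarrow> (case run c1 m of None \<Rightarrow> None | Some (k, m') \<Rightarrow> Some (k + 1, m'))
      | Some False \<Rightarrow> (case run c2 m of None \<Rightarrow> None | Some (k, m') \<Rightarrow> Some (k + 1, m')))"
| "run (While b c) m = None"

lemma run_exec: "run c m = Some (k, m') \<Longrightarrow> exec c m k m'"
proof (induction c arbitrary: m k m')
  case (Store a e)
  then obtain va v where "eval a m = Some va" "eval e m = Some v" "va \<in> \<nat>" "k = 1" "m' = m(nat \<lfloor>va\<rfloor> := v)"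
    by (auto split: option.splits if_splits)
  then show ?case by (metis exec.ExStore)
next
  case (Seq c1 c2)
  then obtain k1 m1 k2 where "run c1 m = Some (k1, m1)" "run c2 m1 = Some (k2, m')" "k = k1 + k2"
    by (auto split: option.splits)
  then show ?case using Seq.IH by (metis exec.ExSeq)
next
  case (If b c1 c2)
  show ?case
  proof (cases "beval b m")
    case None then show ?thesis using If.prems by simp
  next
    case (Some bv)
    show ?thesis
    proof (cases bv)
      case True
      then obtain k' where "run c1 m = Some (k', m')" "k = k' + 1" using If.prems Some by (auto split: option.splits)
      then show ?thesis using If.IH Some True by (metis exec.ExIfT)
    next
      case False
      then obtain k' where "run c2 m = Some (k', m')" "k = k' + 1" using If.prems Some by (auto split: option.splits)
      then show ?thesis using If.IH Some False by (metis exec.ExIfF)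
    qed
  qed
next
next
  case Skip then show ?case using exec.ExSkip by simp
qed (auto)

lemma nat_int_add_num[simp]: "nat (int a + numeral k) = a + numeral k"
  by (simp add: nat_add_distrib)
lemma rn_add_num: "real a + numeral k = real (a + numeral k)" by simp
lemma rn_num_add: "numeral k + real a = real (numeral k + a)" by simp
lemma rn_add_one: "real a + 1 = real (a + 1)" by simp
lemma rn_add: "real a + real b = real (a + b)" by simp
lemma rn_mult: "real a * real b = real (a * b)" by simp
lemma rn_num_mult: "numeral k * real b = real (numeral k * b)" by simp
lemma rn_floor[simp]: "nat \<lfloor>real a\<rfloor> = a" by simp
lemmas evs = rn_add_num rn_num_add rn_add_one rn_add rn_mult rn_num_mult

abbreviation rg :: "int \<Rightarrow> expr" where "rg c \<equiv> Add (Ld (Const 2)) (Const c)"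
abbreviation rd :: "int \<Rightarrow> expr" where "rd c \<equiv> Ld (rg c)"
abbreviation st :: "int \<Rightarrow> expr \<Rightarrow> com" where "st c e \<equiv> Store (rg c) e"

definition BB :: "inst \<Rightarrow> nat" where "BB I = 3 * NN I"
definition ix :: "nat \<Rightarrow> nat \<Rightarrow> nat \<Rightarrow> nat \<Rightarrow> nat \<Rightarrow> nat" where
  "ix N i j k l = ((i*N+j)*N+k)*N+l"

definition Base :: "inst \<Rightarrow> mem \<Rightarrow> bool" where
  "Base I m \<longleftrightarrow> m 2 = real (BB I) \<and> m (BB I) = real (n1 I) \<and> m (BB I + 1) = real (n2 I)
     \<and> m (BB I + 2) = pt I \<and> m (BB I + 3) = real (NN I) \<and> m (BB I + 4) = real (n1 I + n2 I)
     \<and> m (BB I + 23) = real (BB I + 32 + NN I ^ 4)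
     \<and> (\<forall>a. 3 \<le> a \<longrightarrow> a < BB I \<longrightarrow> m a = input_mem I a)"

definition TabOK :: "objective \<Rightarrow> inst \<Rightarrow> mem \<Rightarrow> nat \<Rightarrow> bool" where
  "TabOK ob I m lo \<longleftrightarrow> (\<forall>i j k l. i < NN I \<longrightarrow> j < NN I \<longrightarrow> k < NN I \<longrightarrow> l < NN I \<longrightarrow> lo \<le> ix (NN I) i j k l
     \<longrightarrow> m (BB I + 32 + ix (NN I) i j k l) = V ob I i j k l)"

definition idxE :: "int \<Rightarrow> int \<Rightarrow> int \<Rightarrow> int \<Rightarrow> expr" where
  "idxE a b c d = Add (Add (Ld (Const 2)) (Const 32))
     (Add (Mul (Add (Mul (Add (Mul (rd a) (rd 3)) (rd b)) (rd 3)) (rd c)) (rd 3)) (rd d))"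

fun COST :: "objective \<Rightarrow> com" where
  "COST WeightedCompletion = st 17 (Mul (Ld (Add (Mul (Const 3) (rd 14)) (Const 2))) (rd 20))"
| "COST WeightedTardiness = If (Less (Ld (Add (Mul (Const 3) (rd 14)) (Const 1))) (rd 20))
     (st 17 (Mul (Ld (Add (Mul (Const 3) (rd 14)) (Const 2))) (Sub (rd 20) (Ld (Add (Mul (Const 3) (rd 14)) (Const 1))))))
     (st 17 (Const 0))"

definition TRANS :: "objective \<Rightarrow> com" where
  "TRANS ob = Seq (st 26 (Ld (Mul (Const 3) (rd 14))))
    (Seq (If (Less (rd 9) (rd 26))
           (Seq (st 18 (rd 14)) (Seq (st 19 (Const 1)) (st 20 (Add (rd 26) (rd 2)))))
           (Seq (st 18 (rd 7)) (Seq (st 19 (Add (rd 8) (Const 1))) (st 20 (Add (rd 9) (rd 2))))))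
    (Seq (COST ob) (st 17 (Add (rd 17) (Ld (idxE 15 16 18 19))))))"

lemma base_inp: "Base I m \<Longrightarrow> 0 < kx \<Longrightarrow> kx < NN I \<Longrightarrow>
   m (3*kx) = input_mem I (3*kx) \<and> m (3*kx+1) = input_mem I (3*kx+1) \<and> m (3*kx+2) = input_mem I (3*kx+2)"
  unfolding Base_def BB_def by auto

lemma trans_spec:
  assumes B: "Base I m" and r: "m (BB I + 7) = real k" "m (BB I + 8) = real l" "m (BB I + 9) = tm I k l"
    "m (BB I + 14) = real kx" "m (BB I + 15) = real i2" "m (BB I + 16) = real j2"
    and b: "0 < kx" "kx < NN I" "i2 < NN I" "j2 < NN I" "k < NN I" "l + 1 < NN I"
    and T: "TabOK ob I m lo" "lo \<le> ix (NN I) i2 j2 (fst (nxt I kx k l)) (snd (nxt I kx k l))"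
  shows "\<exists>c m'. run (TRANS ob) m = Some (c, m') \<and> c \<le> 20 \<and> m' (BB I + 17) = tr ob I kx i2 j2 k l
     \<and> m' (BB I + 18) = real (fst (nxt I kx k l)) \<and> m' (BB I + 19) = real (snd (nxt I kx k l))
     \<and> (\<forall>a. a \<noteq> BB I + 17 \<and> a \<noteq> BB I + 18 \<and> a \<noteq> BB I + 19 \<and> a \<noteq> BB I + 20 \<and> a \<noteq> BB I + 26 \<longrightarrow> m' a = m a)"
proof -
  have i: "m (3*kx) = input_mem I (3*kx)" "m (3*kx+1) = input_mem I (3*kx+1)" "m (3*kx+2) = input_mem I (3*kx+2)"
    using base_inp[OF B b(1,2)] by auto
  have lt: "3*kx+2 < BB I" using b by (simp add: BB_def)
  have b2: "m 2 = real (BB I)" "m (BB I + 2) = pt I" "m (BB I + 3) = real (NN I)" using B by (auto simp: Base_def)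
  let ?k' = "fst (nxt I kx k l)" and ?l' = "snd (nxt I kx k l)"
  have "?k' < NN I" "?l' < NN I" using b by (auto simp: nxt_def)
  then have tab: "m (BB I + 32 + ix (NN I) i2 j2 ?k' ?l') = V ob I i2 j2 ?k' ?l'"
    using T b unfolding TabOK_def by blast
  show ?thesis
  proof (cases "tm I k l < input_mem I (3*kx)")
    case True
    have nx: "?k' = kx" "?l' = 1" "tm I ?k' ?l' = input_mem I (3*kx) + pt I" using True b by (auto simp: nxt_def tm_def)
    show ?thesis
    proof (cases ob)
      case WeightedCompletion
      then show ?thesis
        using True tab nx i lt b2 r unfolding TRANS_def idxE_def
        apply (simp del: of_nat_add of_nat_mult of_nat_Suc add: evs ix_def)
        apply (simp add: tr_def costk_def nx)
        done
    next
      case WeightedTardiness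
      then show ?thesis
        using True tab nx i lt b2 r unfolding TRANS_def idxE_def
        apply (cases "input_mem I (3*kx+1) < input_mem I (3*kx) + pt I")
        apply (simp_all del: of_nat_add of_nat_mult of_nat_Suc add: evs ix_def)
        apply (simp_all add: tr_def costk_def nx)
        done
    qed
  next
    case False
    have nx: "?k' = k" "?l' = l + 1" "tm I ?k' ?l' = tm I k l + pt I" using False b by (auto simp: nxt_def tm_def algebra_simps)
    show ?thesis
    proof (cases ob)
      case WeightedCompletion
      then show ?thesis
        using False tab nx i lt b2 r unfolding TRANS_def idxE_def
        apply (simp del: of_nat_add of_nat_mult of_nat_Suc add: evs ix_def)
        apply (simp add: tr_def costk_def nx)
        done
    next
      case WeightedTardiness
      then show ?thesis
        using False tab nx i lt b2 r unfolding TRANS_def idxE_def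
        apply (cases "input_mem I (3*kx+1) < tm I k l + pt I")
        apply (simp_all del: of_nat_add of_nat_mult of_nat_Suc add: evs ix_def)
        apply (simp_all add: tr_def costk_def nx)
        done
    qed
  qed
qed

lemma run_Seq: "run c1 m = Some (k1, m1) \<Longrightarrow> run c2 m1 = Some (k2, m2) \<Longrightarrow> run (Seq c1 c2) m = Some (k1+k2, m2)"
  by simp
lemma run_IfT: "beval b m = Some True \<Longrightarrow> run c1 m = Some (k, m') \<Longrightarrow> run (If b c1 c2) m = Some (k+1, m')"
  by simp
lemma run_IfF: "beval b m = Some False \<Longrightarrow> run c2 m = Some (k, m') \<Longrightarrow> run (If b c1 c2) m = Some (k+1, m')"
  by simp

definition unch :: "mem \<Rightarrow> mem \<Rightarrow> nat set \<Rightarrow> bool" where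
  "unch m m' A \<longleftrightarrow> (\<forall>a. a \<notin> A \<longrightarrow> m' a = m a)"

definition Scr :: "inst \<Rightarrow> nat set" where
  "Scr I = {BB I + 10 ..< BB I + 21} \<union> {BB I + 24, BB I + 26}"

lemma base_unch: assumes "Base I m" "unch m m' A" "\<forall>a\<in>A. BB I + 5 \<le> a \<and> a \<noteq> BB I + 23"
  shows "Base I m'"
proof -
  have u: "\<And>a. a \<notin> A \<Longrightarrow> m' a = m a" using assms(2) unfolding unch_def by blast
  have n: "\<And>a. (a < BB I + 5 \<or> a = BB I + 23) \<Longrightarrow> a \<notin> A" using assms(3) by fastforce
  have "BB I \<ge> 3" by (simp add: BB_def NN_def)
  then show ?thesis using assms(1) unfolding Base_def
    by (simp add: u n)
qed

lemma tab_unch: assumes "TabOK ob I m lo" "unch m m' A" "\<forall>a\<in>A. a < BB I + 32" shows "TabOK ob I m' lo"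
  unfolding TabOK_def
proof (intro allI impI)
  fix i j k l
  assume h: "i < NN I" "j < NN I" "k < NN I" "l < NN I" "lo \<le> ix (NN I) i j k l"
  have "BB I + 32 + ix (NN I) i j k l \<notin> A" using assms(3) by force
  then have "m' (BB I + 32 + ix (NN I) i j k l) = m (BB I + 32 + ix (NN I) i j k l)"
    using assms(2) unfolding unch_def by blast
  then show "m' (BB I + 32 + ix (NN I) i j k l) = V ob I i j k l" using assms(1) h unfolding TabOK_def by simp
qed

lemma lexlt: "(x::nat) < y \<Longrightarrow> b < N \<Longrightarrow> x*N + b < y*N + b'"
proof -
  assume "x < y" "b < N"
  then have "x*N + b < x*N + N" by simp
  also have "\<dots> = (x+1)*N" by simp
  also have "\<dots> \<le> y*N" using \<open>x < y\<close> by (intro mult_le_mono1) simp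
  finally show ?thesis by simp
qed

lemma ix_succ1: assumes "j < N" "k < N" "l < N" shows "ix N i j k l < ix N (i+1) j' k' l'"
proof -
  have "i*N+j < (i+1)*N+j'" using lexlt[of i "i+1" j N j'] assms by simp
  then have "(i*N+j)*N+k < ((i+1)*N+j')*N+k'" using lexlt[of _ _ k N k'] assms by blast
  then have "((i*N+j)*N+k)*N+l < (((i+1)*N+j')*N+k')*N+l'" using lexlt[of _ _ l N l'] assms by blast
  then show ?thesis unfolding ix_def .
qed

lemma ix_succ2: assumes "k < N" "l < N" shows "ix N i j k l < ix N i (j+1) k' l'"
proof -
  have "i*N+j < i*N+(j+1)" by simp
  then have "(i*N+j)*N+k < (i*N+(j+1))*N+k'" using lexlt[of "i*N+j" "i*N+(j+1)" k N k'] assms by simp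
  then have "((i*N+j)*N+k)*N+l < ((i*N+(j+1))*N+k')*N+l'" using lexlt[of _ _ l N l'] assms by blast
  then show ?thesis unfolding ix_def .
qed

definition TIME :: com where
  "TIME = If (Eq (rd 7) (Const 0)) (st 9 (Mul (rd 8) (rd 2))) (st 9 (Add (Ld (Mul (Const 3) (rd 7))) (Mul (rd 8) (rd 2))))"

definition PRE :: com where
  "PRE = Seq TIME (Seq (st 10 (Const 0)) (Seq (st 11 (Const 0)) (st 24 (Const 0))))"

definition PRE1 :: com where
  "PRE1 = Seq (st 14 (Add (rd 5) (Const 1))) (Seq (st 15 (Add (rd 5) (Const 1))) (st 16 (rd 6)))"
definition POST1 :: com where
  "POST1 = Seq (st 10 (rd 17)) (Seq (st 11 (Const 1)) (Seq (st 12 (rd 18)) (Seq (st 13 (rd 19)) (st 24 (Const 1)))))"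
definition OPT1 :: "objective \<Rightarrow> com" where
  "OPT1 ob = If (Less (rd 5) (rd 0)) (Seq PRE1 (Seq (TRANS ob) POST1)) Skip"

definition PRE2 :: com where
  "PRE2 = Seq (st 14 (Add (Add (rd 0) (rd 6)) (Const 1))) (Seq (st 15 (rd 5)) (st 16 (Add (rd 6) (Const 1))))"
definition SEL :: com where
  "SEL = If (And (Eq (rd 24) (Const 1)) (BNot (Less (rd 17) (rd 10)))) Skip
           (Seq (st 10 (rd 17)) (Seq (st 11 (Const 2)) (Seq (st 12 (rd 18)) (st 13 (rd 19)))))"
definition OPT2 :: "objective \<Rightarrow> com" where
  "OPT2 ob = If (Less (rd 6) (rd 1)) (Seq PRE2 (Seq (TRANS ob) SEL)) Skip"

definition STEP :: "objective \<Rightarrow> com" where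
  "STEP ob = Seq PRE (Seq (OPT1 ob) (OPT2 ob))"

lemma pre_spec:
  assumes B: "Base I m" and r: "m (BB I + 7) = real k" "m (BB I + 8) = real l" and b: "k < NN I"
  shows "run PRE m = Some (Suc (Suc (Suc (Suc (Suc 0)))), m(BB I + 9 := tm I k l, BB I + 10 := 0, BB I + 11 := 0, BB I + 24 := 0))"
proof -
  have b2: "m 2 = real (BB I)" "m (BB I + 2) = pt I" using B by (auto simp: Base_def)
  show ?thesis
  proof (cases "k = 0")
    case True
    have t: "tm I k l = real l * pt I" using True by (simp add: tm_def)
    show ?thesis using r b2 True unfolding PRE_def TIME_def t
      by (simp del: of_nat_add of_nat_mult of_nat_Suc add: evs)
  next
    case False
    have i: "m (3*k) = input_mem I (3*k)" using base_inp[OF B _ b] False by auto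
    have t: "tm I k l = input_mem I (3*k) + real l * pt I" using False by (simp add: tm_def)
    show ?thesis using r b2 i False unfolding PRE_def TIME_def t
      by (simp del: of_nat_add of_nat_mult of_nat_Suc add: evs)
  qed
qed

lemma BB3: "3 \<le> BB I" by (simp add: BB_def NN_def)

lemma opt1_spec:
  assumes B: "Base I m" and r: "m (BB I + 5) = real i" "m (BB I + 6) = real j" "m (BB I + 7) = real k"
    "m (BB I + 8) = real l" "m (BB I + 9) = tm I k l" "m (BB I + 10) = 0" "m (BB I + 11) = 0" "m (BB I + 24) = 0"
    and b: "i < NN I" "j < NN I" "k < NN I" "l + 1 < NN I"
    and T: "TabOK ob I m lo" "lo \<le> ix (NN I) i j k l + 1"
  shows "\<exists>c m'. run (OPT1 ob) m = Some (c, m') \<and> c \<le> 40 \<and> unch m m' (Scr I)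
    \<and> m' (BB I + 10) = (if i < n1 I then tr ob I (i+1) (i+1) j k l else 0)
    \<and> m' (BB I + 11) = (if i < n1 I then 1 else 0)
    \<and> m' (BB I + 24) = (if i < n1 I then 1 else 0)
    \<and> (i < n1 I \<longrightarrow> m' (BB I + 12) = real (fst (nxt I (i+1) k l)) \<and> m' (BB I + 13) = real (snd (nxt I (i+1) k l)))"
proof -
  have b2: "m 2 = real (BB I)" "m (BB I) = real (n1 I)" using B by (auto simp: Base_def)
  show ?thesis
  proof (cases "i < n1 I")
    case False
    then have "run (OPT1 ob) m = Some (Suc (Suc 0), m)" using b2 r unfolding OPT1_def
      by (simp del: of_nat_add of_nat_mult of_nat_Suc add: evs)
    then show ?thesis using False r unfolding unch_def by auto
  next
    case True
    define m2 where "m2 = m(BB I + 14 := real (i+1), BB I + 15 := real (i+1), BB I + 16 := real j)"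
    have run2: "run PRE1 m = Some (Suc (Suc (Suc 0)), m2)" using b2 r unfolding PRE1_def m2_def
      by (simp del: of_nat_add of_nat_mult of_nat_Suc add: evs)
    have u2: "unch m m2 {BB I + 14, BB I + 15, BB I + 16}" unfolding unch_def m2_def by simp
    have B2: "Base I m2" by (rule base_unch[OF B u2]) auto
    have T2: "TabOK ob I m2 lo" by (rule tab_unch[OF T(1) u2]) auto
    have "ix (NN I) i j k l < ix (NN I) (i+1) j (fst (nxt I (i+1) k l)) (snd (nxt I (i+1) k l))"
      using ix_succ1[of j "NN I" k l i] b by simp
    then have lo2: "lo \<le> ix (NN I) (i+1) j (fst (nxt I (i+1) k l)) (snd (nxt I (i+1) k l))"
      using T(2) by linarith
    have r2: "m2 (BB I + 7) = real k" "m2 (BB I + 8) = real l" "m2 (BB I + 9) = tm I k l"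
      "m2 (BB I + 14) = real (i+1)" "m2 (BB I + 15) = real (i+1)" "m2 (BB I + 16) = real j"
      using r unfolding m2_def by simp_all
    have ib: "i + 1 < NN I" using True by (simp add: NN_def)
    obtain c3 m3 where t3: "run (TRANS ob) m2 = Some (c3, m3)" "c3 \<le> 20"
      "m3 (BB I + 17) = tr ob I (i+1) (i+1) j k l"
      "m3 (BB I + 18) = real (fst (nxt I (i+1) k l))" "m3 (BB I + 19) = real (snd (nxt I (i+1) k l))"
      "\<forall>a. a \<noteq> BB I + 17 \<and> a \<noteq> BB I + 18 \<and> a \<noteq> BB I + 19 \<and> a \<noteq> BB I + 20 \<and> a \<noteq> BB I + 26 \<longrightarrow> m3 a = m2 a"
      using trans_spec[OF B2 r2 _ ib ib b(2) b(3) b(4) T2 lo2] by auto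
    have m32: "m3 2 = real (BB I)" using t3(6) b2 unfolding m2_def by simp
    define m4 where "m4 = m3(BB I + 10 := tr ob I (i+1) (i+1) j k l, BB I + 11 := 1,
        BB I + 12 := real (fst (nxt I (i+1) k l)), BB I + 13 := real (snd (nxt I (i+1) k l)), BB I + 24 := 1)"
    have run4: "run POST1 m3 = Some (Suc (Suc (Suc (Suc (Suc 0)))), m4)" using m32 t3(3-5) unfolding POST1_def m4_def
      by (simp del: of_nat_add of_nat_mult of_nat_Suc add: evs)
    have "run (OPT1 ob) m = Some (Suc (Suc (Suc 0)) + (c3 + Suc (Suc (Suc (Suc (Suc 0))))) + 1, m4)"
      unfolding OPT1_def
      by (rule run_IfT, use b2 r True in \<open>simp del: of_nat_add of_nat_mult of_nat_Suc add: evs\<close>)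
         (rule run_Seq[OF run2 run_Seq[OF t3(1) run4]])
    moreover have "unch m m4 (Scr I)" unfolding unch_def
    proof (intro allI impI)
      fix a assume "a \<notin> Scr I"
      then show "m4 a = m a" using t3(6) unfolding m4_def m2_def Scr_def by auto
    qed
    moreover have "m4 (BB I + 10) = tr ob I (i+1) (i+1) j k l" "m4 (BB I + 11) = 1" "m4 (BB I + 24) = 1"
      "m4 (BB I + 12) = real (fst (nxt I (i+1) k l))" "m4 (BB I + 13) = real (snd (nxt I (i+1) k l))"
      unfolding m4_def by simp_all
    ultimately show ?thesis using True t3(2) by (intro exI[of _ "Suc (Suc (Suc 0)) + (c3 + Suc (Suc (Suc (Suc (Suc 0))))) + 1"] exI[of _ m4]) auto
  qed
qed

definition chn :: "objective \<Rightarrow> inst \<Rightarrow> nat \<Rightarrow> nat \<Rightarrow> nat \<Rightarrow> nat \<Rightarrow> nat" where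
  "chn ob I i j k l = (if j < n2 I \<and> (\<not> i < n1 I \<or> tr ob I (n1 I+j+1) i (j+1) k l < tr ob I (i+1) (i+1) j k l) then 2
     else if i < n1 I then 1 else 0)"

definition ckx :: "objective \<Rightarrow> inst \<Rightarrow> nat \<Rightarrow> nat \<Rightarrow> nat \<Rightarrow> nat \<Rightarrow> nat" where
  "ckx ob I i j k l = (if chn ob I i j k l = 2 then n1 I + j + 1 else i + 1)"

lemma opt2_spec:
  assumes B: "Base I m" and r: "m (BB I + 5) = real i" "m (BB I + 6) = real j" "m (BB I + 7) = real k"
    "m (BB I + 8) = real l" "m (BB I + 9) = tm I k l"
    "m (BB I + 10) = (if i < n1 I then tr ob I (i+1) (i+1) j k l else 0)"
    "m (BB I + 11) = (if i < n1 I then 1 else 0)"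
    "m (BB I + 24) = (if i < n1 I then 1 else 0)"
    "i < n1 I \<longrightarrow> m (BB I + 12) = real (fst (nxt I (i+1) k l)) \<and> m (BB I + 13) = real (snd (nxt I (i+1) k l))"
    and b: "i < NN I" "j < NN I" "k < NN I" "l + 1 < NN I"
    and T: "TabOK ob I m lo" "lo \<le> ix (NN I) i j k l + 1"
  shows "\<exists>c m'. run (OPT2 ob) m = Some (c, m') \<and> c \<le> 40 \<and> unch m m' (Scr I)
    \<and> m' (BB I + 10) = Vb ob I i j k l
    \<and> m' (BB I + 11) = real (chn ob I i j k l)
    \<and> (chn ob I i j k l \<noteq> 0 \<longrightarrow> m' (BB I + 12) = real (fst (nxt I (ckx ob I i j k l) k l))
         \<and> m' (BB I + 13) = real (snd (nxt I (ckx ob I i j k l) k l)))"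
proof -
  have b2: "m 2 = real (BB I)" "m (BB I) = real (n1 I)" "m (BB I + 1) = real (n2 I)" using B by (auto simp: Base_def)
  show ?thesis
  proof (cases "j < n2 I")
    case False
    then have "run (OPT2 ob) m = Some (Suc (Suc 0), m)" using b2 r unfolding OPT2_def
      by (simp del: of_nat_add of_nat_mult of_nat_Suc add: evs)
    moreover have "m (BB I + 10) = Vb ob I i j k l" "m (BB I + 11) = real (chn ob I i j k l)"
      using False r by (simp_all add: Vb_def chn_def)
    moreover have "chn ob I i j k l \<noteq> 0 \<longrightarrow> m (BB I + 12) = real (fst (nxt I (ckx ob I i j k l) k l))
         \<and> m (BB I + 13) = real (snd (nxt I (ckx ob I i j k l) k l))"
      using False r by (simp add: chn_def ckx_def)
    ultimately show ?thesis unfolding unch_def by auto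
  next
    case True
    define m2 where "m2 = m(BB I + 14 := real (n1 I+j+1), BB I + 15 := real i, BB I + 16 := real (j+1))"
    have run2: "run PRE2 m = Some (Suc (Suc (Suc 0)), m2)" using b2 r unfolding PRE2_def m2_def
      by (simp del: of_nat_add of_nat_mult of_nat_Suc add: evs)
    have u2: "unch m m2 {BB I + 14, BB I + 15, BB I + 16}" unfolding unch_def m2_def by simp
    have B2: "Base I m2" by (rule base_unch[OF B u2]) auto
    have T2: "TabOK ob I m2 lo" by (rule tab_unch[OF T(1) u2]) auto
    have "ix (NN I) i j k l < ix (NN I) i (j+1) (fst (nxt I (n1 I+j+1) k l)) (snd (nxt I (n1 I+j+1) k l))"
      using ix_succ2[of k "NN I" l i j] b by simp
    then have lo2: "lo \<le> ix (NN I) i (j+1) (fst (nxt I (n1 I+j+1) k l)) (snd (nxt I (n1 I+j+1) k l))"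
      using T(2) by linarith
    have r2: "m2 (BB I + 7) = real k" "m2 (BB I + 8) = real l" "m2 (BB I + 9) = tm I k l"
      "m2 (BB I + 14) = real (n1 I+j+1)" "m2 (BB I + 15) = real i" "m2 (BB I + 16) = real (j+1)"
      using r unfolding m2_def by simp_all
    have kb: "0 < n1 I+j+1" "n1 I+j+1 < NN I" "j + 1 < NN I" using True by (simp_all add: NN_def)
    obtain c3 m3 where t3: "run (TRANS ob) m2 = Some (c3, m3)" "c3 \<le> 20"
      "m3 (BB I + 17) = tr ob I (n1 I+j+1) i (j+1) k l"
      "m3 (BB I + 18) = real (fst (nxt I (n1 I+j+1) k l))" "m3 (BB I + 19) = real (snd (nxt I (n1 I+j+1) k l))"
      "\<forall>a. a \<noteq> BB I + 17 \<and> a \<noteq> BB I + 18 \<and> a \<noteq> BB I + 19 \<and> a \<noteq> BB I + 20 \<and> a \<noteq> BB I + 26 \<longrightarrow> m3 a = m2 a"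
      using trans_spec[OF B2 r2 kb(1) kb(2) b(1) kb(3) b(3) b(4) T2 lo2] by auto
    have m3r: "m3 2 = real (BB I)" "m3 (BB I + 10) = m (BB I + 10)" "m3 (BB I + 11) = m (BB I + 11)"
      "m3 (BB I + 24) = m (BB I + 24)" "m3 (BB I + 12) = m (BB I + 12)" "m3 (BB I + 13) = m (BB I + 13)"
      using t3(6) b2 unfolding m2_def by simp_all
    let ?t1 = "tr ob I (i+1) (i+1) j k l" and ?t2 = "tr ob I (n1 I+j+1) i (j+1) k l"
    show ?thesis
    proof (cases "i < n1 I \<and> \<not> ?t2 < ?t1")
      case True2: True
      have run4: "run SEL m3 = Some (Suc (Suc 0), m3)" using m3r t3(3) r True2 unfolding SEL_def
        by (simp del: of_nat_add of_nat_mult of_nat_Suc add: evs)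
      have "run (OPT2 ob) m = Some (Suc (Suc (Suc 0)) + (c3 + Suc (Suc 0)) + 1, m3)"
        unfolding OPT2_def
        by (rule run_IfT, use b2 r True in \<open>simp del: of_nat_add of_nat_mult of_nat_Suc add: evs\<close>)
           (rule run_Seq[OF run2 run_Seq[OF t3(1) run4]])
      moreover have "unch m m3 (Scr I)" unfolding unch_def
      proof (intro allI impI)
        fix a assume "a \<notin> Scr I"
        then show "m3 a = m a" using t3(6) unfolding m2_def Scr_def by auto
      qed
      moreover have "chn ob I i j k l = 1" "ckx ob I i j k l = i + 1" using True2 True by (simp_all add: chn_def ckx_def)
      moreover have "Vb ob I i j k l = ?t1" using True2 True by (simp add: Vb_def)
      ultimately show ?thesis using True2 t3(2) m3r r by (intro exI[of _ "Suc (Suc (Suc 0)) + (c3 + Suc (Suc 0)) + 1"] exI[of _ m3]) auto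
    next
      case False2: False
      define m4 where "m4 = m3(BB I + 10 := ?t2, BB I + 11 := 2,
        BB I + 12 := real (fst (nxt I (n1 I+j+1) k l)), BB I + 13 := real (snd (nxt I (n1 I+j+1) k l)))"
      have run4: "run SEL m3 = Some (Suc (Suc (Suc (Suc (Suc 0)))), m4)" using m3r t3(3-5) r False2 unfolding SEL_def m4_def
        by (auto simp del: of_nat_add of_nat_mult of_nat_Suc simp add: evs)
      have "run (OPT2 ob) m = Some (Suc (Suc (Suc 0)) + (c3 + Suc (Suc (Suc (Suc (Suc 0))))) + 1, m4)"
        unfolding OPT2_def
        by (rule run_IfT, use b2 r True in \<open>simp del: of_nat_add of_nat_mult of_nat_Suc add: evs\<close>)
           (rule run_Seq[OF run2 run_Seq[OF t3(1) run4]])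
      moreover have "unch m m4 (Scr I)" unfolding unch_def
      proof (intro allI impI)
        fix a assume "a \<notin> Scr I"
        then show "m4 a = m a" using t3(6) unfolding m4_def m2_def Scr_def by auto
      qed
      moreover have "chn ob I i j k l = 2" "ckx ob I i j k l = n1 I + j + 1" using False2 True by (auto simp: chn_def ckx_def)
      moreover have "Vb ob I i j k l = ?t2" using False2 True by (auto simp: Vb_def)
      moreover have "m4 (BB I + 10) = ?t2" "m4 (BB I + 11) = 2"
        "m4 (BB I + 12) = real (fst (nxt I (n1 I+j+1) k l))" "m4 (BB I + 13) = real (snd (nxt I (n1 I+j+1) k l))"
        unfolding m4_def by simp_all
      ultimately show ?thesis using t3(2) by (intro exI[of _ "Suc (Suc (Suc 0)) + (c3 + Suc (Suc (Suc (Suc (Suc 0))))) + 1"] exI[of _ m4]) auto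
    qed
  qed
qed

lemma step_spec:
  assumes B: "Base I m" and r: "m (BB I + 5) = real i" "m (BB I + 6) = real j" "m (BB I + 7) = real k"
    "m (BB I + 8) = real l"
    and b: "i < NN I" "j < NN I" "k < NN I" "l + 1 < NN I"
    and T: "TabOK ob I m lo" "lo \<le> ix (NN I) i j k l + 1"
  shows "\<exists>c m'. run (STEP ob) m = Some (c, m') \<and> c \<le> 90 \<and> unch m m' (insert (BB I + 9) (Scr I))
    \<and> m' (BB I + 10) = Vb ob I i j k l
    \<and> m' (BB I + 11) = real (chn ob I i j k l)
    \<and> (chn ob I i j k l \<noteq> 0 \<longrightarrow> m' (BB I + 12) = real (fst (nxt I (ckx ob I i j k l) k l))
         \<and> m' (BB I + 13) = real (snd (nxt I (ckx ob I i j k l) k l)))"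
proof -
  define m1 where "m1 = m(BB I + 9 := tm I k l, BB I + 10 := 0, BB I + 11 := 0, BB I + 24 := 0)"
  have run1: "run PRE m = Some (Suc (Suc (Suc (Suc (Suc 0)))), m1)" unfolding m1_def
    using pre_spec[OF B r(3,4) b(3)] .
  have u1: "unch m m1 {BB I + 9, BB I + 10, BB I + 11, BB I + 24}" unfolding unch_def m1_def by simp
  have B1: "Base I m1" by (rule base_unch[OF B u1]) auto
  have T1: "TabOK ob I m1 lo" by (rule tab_unch[OF T(1) u1]) auto
  have r1: "m1 (BB I + 5) = real i" "m1 (BB I + 6) = real j" "m1 (BB I + 7) = real k"
    "m1 (BB I + 8) = real l" "m1 (BB I + 9) = tm I k l" "m1 (BB I + 10) = 0" "m1 (BB I + 11) = 0" "m1 (BB I + 24) = 0"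
    using r unfolding m1_def by simp_all
  obtain c2 m2 where o1: "run (OPT1 ob) m1 = Some (c2, m2)" "c2 \<le> 40" "unch m1 m2 (Scr I)"
    "m2 (BB I + 10) = (if i < n1 I then tr ob I (i+1) (i+1) j k l else 0)"
    "m2 (BB I + 11) = (if i < n1 I then 1 else 0)"
    "m2 (BB I + 24) = (if i < n1 I then 1 else 0)"
    "i < n1 I \<longrightarrow> m2 (BB I + 12) = real (fst (nxt I (i+1) k l)) \<and> m2 (BB I + 13) = real (snd (nxt I (i+1) k l))"
    using opt1_spec[OF B1 r1 b T1 T(2)] by blast
  have sB: "\<forall>a\<in>Scr I. BB I + 5 \<le> a \<and> a \<noteq> BB I + 23" "\<forall>a\<in>Scr I. a < BB I + 32" unfolding Scr_def by auto
  have B2: "Base I m2" by (rule base_unch[OF B1 o1(3) sB(1)])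
  have T2: "TabOK ob I m2 lo" by (rule tab_unch[OF T1 o1(3) sB(2)])
  have nS: "BB I + 5 \<notin> Scr I" "BB I + 6 \<notin> Scr I" "BB I + 7 \<notin> Scr I" "BB I + 8 \<notin> Scr I" "BB I + 9 \<notin> Scr I"
    unfolding Scr_def by auto
  have r2: "m2 (BB I + 5) = real i" "m2 (BB I + 6) = real j" "m2 (BB I + 7) = real k"
    "m2 (BB I + 8) = real l" "m2 (BB I + 9) = tm I k l"
    using o1(3) r1 nS unfolding unch_def by auto
  obtain c3 m3 where o2: "run (OPT2 ob) m2 = Some (c3, m3)" "c3 \<le> 40" "unch m2 m3 (Scr I)"
    "m3 (BB I + 10) = Vb ob I i j k l"
    "m3 (BB I + 11) = real (chn ob I i j k l)"
    "chn ob I i j k l \<noteq> 0 \<longrightarrow> m3 (BB I + 12) = real (fst (nxt I (ckx ob I i j k l) k l))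
         \<and> m3 (BB I + 13) = real (snd (nxt I (ckx ob I i j k l) k l))"
    using opt2_spec[OF B2 r2 o1(4-7) b T2 T(2)] by blast
  have R: "run (STEP ob) m = Some (Suc (Suc (Suc (Suc (Suc 0)))) + (c2 + c3), m3)"
    unfolding STEP_def by (rule run_Seq[OF run1 run_Seq[OF o1(1) o2(1)]])
  have U: "unch m m3 (insert (BB I + 9) (Scr I))"
    unfolding unch_def
  proof (intro allI impI)
    fix a assume a: "a \<notin> insert (BB I + 9) (Scr I)"
    have a1: "a \<notin> {BB I + 9, BB I + 10, BB I + 11, BB I + 24}" "a \<notin> Scr I" using a unfolding Scr_def by auto
    have "m3 a = m2 a" using o2(3) a1(2) unfolding unch_def by blast
    also have "\<dots> = m1 a" using o1(3) a1(2) unfolding unch_def by blast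
    also have "\<dots> = m a" using u1 a1(1) unfolding unch_def by blast
    finally show "m3 a = m a" .
  qed
  have C: "Suc (Suc (Suc (Suc (Suc 0)))) + (c2 + c3) \<le> 90" using o1(2) o2(2) by linarith
  show ?thesis
    apply (rule exI[of _ "Suc (Suc (Suc (Suc (Suc 0)))) + (c2 + c3)"])
    apply (rule exI[of _ m3])
    using R C U o2(4) o2(5) o2(6) by blast
qed

lemma while_rule:
  assumes step: "\<And>t m. t < n \<Longrightarrow> P t m \<Longrightarrow> beval b m = Some True \<and> (\<exists>k m'. exec c m k m' \<and> k \<le> K \<and> P (Suc t) m')"
    and fin: "\<And>m. P n m \<Longrightarrow> beval b m = Some False"
  shows "P 0 m \<Longrightarrow> \<exists>k m'. exec (While b c) m k m' \<and> k \<le> n*(K+1)+1 \<and> P n m'"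
proof -
  have "\<And>t m. t \<le> n \<Longrightarrow> P t m \<Longrightarrow> \<exists>k m'. exec (While b c) m k m' \<and> k \<le> (n-t)*(K+1)+1 \<and> P n m'"
  proof -
    fix t m
    show "t \<le> n \<Longrightarrow> P t m \<Longrightarrow> \<exists>k m'. exec (While b c) m k m' \<and> k \<le> (n-t)*(K+1)+1 \<and> P n m'"
    proof (induction "n - t" arbitrary: t m)
      case 0
      then have "t = n" by simp
      then show ?case using 0 fin exec.ExWhileF by fastforce
    next
      case (Suc d)
      then have tn: "t < n" by simp
      from step[OF tn Suc.prems(2)] obtain k1 m1 where h: "beval b m = Some True" "exec c m k1 m1" "k1 \<le> K" "P (Suc t) m1"
        by blast
      have "d = n - Suc t" using Suc.hyps(2) by simp
      from Suc.hyps(1)[OF this _ h(4)] tn obtain k2 m2 where h2: "exec (While b c) m1 k2 m2" "k2 \<le> (n - Suc t)*(K+1)+1" "P n m2"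
        by auto
      have "exec (While b c) m (k1 + k2 + 1) m2" by (rule exec.ExWhileT[OF h(1,2) h2(1)])
      moreover have "k1 + k2 + 1 \<le> (n-t)*(K+1)+1"
      proof -
        have "n - t = Suc (n - Suc t)" using tn by simp
        then have "(n-t)*(K+1) = (K+1) + (n - Suc t)*(K+1)" by simp
        then show ?thesis using h(3) h2(2) by linarith
      qed
      ultimately show ?case using h2(3) by blast
    qed
  qed
  then show "P 0 m \<Longrightarrow> \<exists>k m'. exec (While b c) m k m' \<and> k \<le> n*(K+1)+1 \<and> P n m'" by fastforce
qed

lemma dmN: "l < N \<Longrightarrow> (x*N+l) div N = x \<and> (x*N+l) mod N = (l::nat)"
  by simp

lemma dm_inj: assumes "l < N" "l' < N" "x*N + l = x'*N + (l'::nat)" shows "x = x' \<and> l = l'"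
proof -
  have "(x*N + l) div N = (x'*N + l') div N" "(x*N + l) mod N = (x'*N + l') mod N" using assms(3) by simp_all
  then show ?thesis using dmN[OF assms(1), of x] dmN[OF assms(2), of x'] by simp
qed

lemma ix_inj: assumes "j < N" "k < N" "l < N" "j' < N" "k' < N" "l' < N" "ix N i j k l = ix N i' j' k' l'"
  shows "i = i' \<and> j = j' \<and> k = k' \<and> l = l'"
proof -
  have e: "((i*N+j)*N+k)*N+l = ((i'*N+j')*N+k')*N+l'" using assms(7) unfolding ix_def .
  have a: "(i*N+j)*N+k = (i'*N+j')*N+k' \<and> l = l'" by (rule dm_inj[OF assms(3,6) e])
  have b: "i*N+j = i'*N+j' \<and> k = k'" by (rule dm_inj[OF assms(2,5)]) (use a in blast)
  have c: "i = i' \<and> j = j'" by (rule dm_inj[OF assms(1,4)]) (use b in blast)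
  show ?thesis using a b c by blast
qed

lemma tab_store:
  assumes T: "TabOK ob I m (ix (NN I) i j k l + 1)" and b: "i < NN I" "j < NN I" "k < NN I" "l < NN I"
  shows "TabOK ob I (m(BB I + 32 + ix (NN I) i j k l := V ob I i j k l)) (ix (NN I) i j k l)"
  unfolding TabOK_def
proof (intro allI impI)
  fix i' j' k' l'
  assume h: "i' < NN I" "j' < NN I" "k' < NN I" "l' < NN I" "ix (NN I) i j k l \<le> ix (NN I) i' j' k' l'"
  show "(m(BB I + 32 + ix (NN I) i j k l := V ob I i j k l)) (BB I + 32 + ix (NN I) i' j' k' l') = V ob I i' j' k' l'"
  proof (cases "ix (NN I) i' j' k' l' = ix (NN I) i j k l")
    case True
    have eq: "i = i' \<and> j = j' \<and> k = k' \<and> l = l'" by (rule ix_inj[OF b(2-4) h(2-4) True[symmetric]])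
    show ?thesis using eq by simp
  next
    case False
    have ge: "ix (NN I) i j k l + 1 \<le> ix (NN I) i' j' k' l'" using h(5) False by simp
    have ne: "BB I + 32 + ix (NN I) i' j' k' l' \<noteq> BB I + 32 + ix (NN I) i j k l" using False by simp
    have "m (BB I + 32 + ix (NN I) i' j' k' l') = V ob I i' j' k' l'" using T h(1-4) ge unfolding TabOK_def by blast
    then show ?thesis using ne by simp
  qed
qed

lemma rn_sub_one: "real (Suc v) - 1 = real v" by simp

definition LB :: "objective \<Rightarrow> com" where
  "LB ob = Seq (st 8 (Sub (rd 8) (Const 1)))
     (If (Less (Add (rd 8) (Const 1)) (rd 3)) (Seq (STEP ob) (Store (idxE 5 6 7 8) (rd 10))) (Store (idxE 5 6 7 8) (Const 0)))"

lemma lb_spec: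
  assumes B: "Base I m" and r: "m (BB I + 5) = real i" "m (BB I + 6) = real j" "m (BB I + 7) = real k"
    "m (BB I + 8) = real (Suc v)"
    and b: "i < NN I" "j < NN I" "k < NN I" "v < NN I"
    and T: "TabOK ob I m (ix (NN I) i j k (Suc v))"
  shows "\<exists>c m'. run (LB ob) m = Some (c, m') \<and> c \<le> 100 \<and> Base I m'
    \<and> m' (BB I + 5) = real i \<and> m' (BB I + 6) = real j \<and> m' (BB I + 7) = real k \<and> m' (BB I + 8) = real v
    \<and> TabOK ob I m' (ix (NN I) i j k v)"
proof -
  define m1 where "m1 = m(BB I + 8 := real v)"
  have b2: "m 2 = real (BB I)" "m (BB I + 3) = real (NN I)" using B by (auto simp: Base_def)
  have run1: "run (st 8 (Sub (rd 8) (Const 1))) m = Some (Suc 0, m1)" using b2 r unfolding m1_def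
    by (simp del: of_nat_add of_nat_mult of_nat_Suc add: evs rn_sub_one)
  have u1: "unch m m1 {BB I + 8}" unfolding unch_def m1_def by simp
  have B1: "Base I m1" by (rule base_unch[OF B u1]) auto
  have T1: "TabOK ob I m1 (ix (NN I) i j k v + 1)" using tab_unch[OF T u1] by (simp add: ix_def)
  have r1: "m1 (BB I + 5) = real i" "m1 (BB I + 6) = real j" "m1 (BB I + 7) = real k" "m1 (BB I + 8) = real v"
    "m1 2 = real (BB I)" "m1 (BB I + 3) = real (NN I)"
    using r b2 unfolding m1_def by simp_all
  show ?thesis
  proof (cases "v + 1 < NN I")
    case True
    obtain c2 m2 where s: "run (STEP ob) m1 = Some (c2, m2)" "c2 \<le> 90" "unch m1 m2 (insert (BB I + 9) (Scr I))"
      "m2 (BB I + 10) = Vb ob I i j k v"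
      using step_spec[OF B1 r1(1-4) b(1-3) True T1 le_refl] by blast
    have sB: "\<forall>a\<in>insert (BB I + 9) (Scr I). BB I + 5 \<le> a \<and> a \<noteq> BB I + 23" "\<forall>a\<in>insert (BB I + 9) (Scr I). a < BB I + 32"
      unfolding Scr_def by auto
    have B2: "Base I m2" by (rule base_unch[OF B1 s(3) sB(1)])
    have T2: "TabOK ob I m2 (ix (NN I) i j k v + 1)" by (rule tab_unch[OF T1 s(3) sB(2)])
    have nS: "BB I + 5 \<notin> insert (BB I + 9) (Scr I)" "BB I + 6 \<notin> insert (BB I + 9) (Scr I)" "BB I + 7 \<notin> insert (BB I + 9) (Scr I)" "BB I + 8 \<notin> insert (BB I + 9) (Scr I)"
      "BB I + 3 \<notin> insert (BB I + 9) (Scr I)" "2 \<notin> insert (BB I + 9) (Scr I)"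
      unfolding Scr_def by auto
    have r2: "m2 (BB I + 5) = real i" "m2 (BB I + 6) = real j" "m2 (BB I + 7) = real k" "m2 (BB I + 8) = real v"
      "m2 2 = real (BB I)" "m2 (BB I + 3) = real (NN I)"
      using s(3) r1 nS unfolding unch_def by metis+
    define m3 where "m3 = m2(BB I + 32 + ix (NN I) i j k v := V ob I i j k v)"
    have vv: "V ob I i j k v = Vb ob I i j k v" using True by (simp add: V_eq)
    have run3: "run (Store (idxE 5 6 7 8) (rd 10)) m2 = Some (Suc 0, m3)"
      using r2 s(4) vv unfolding m3_def idxE_def ix_def
      by (simp del: of_nat_add of_nat_mult of_nat_Suc add: evs)
    have "run (LB ob) m = Some (Suc 0 + (c2 + Suc 0 + 1), m3)"
      unfolding LB_def
      by (rule run_Seq[OF run1], rule run_IfT)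
         (use r1 True in \<open>simp del: of_nat_add of_nat_mult of_nat_Suc add: evs\<close>, rule run_Seq[OF s(1) run3])
    moreover have "Base I m3" by (rule base_unch[OF B2, of m3 "{BB I + 32 + ix (NN I) i j k v}"]) (auto simp: unch_def m3_def)
    moreover have "TabOK ob I m3 (ix (NN I) i j k v)" unfolding m3_def by (rule tab_store[OF T2 b(1-3)]) (use True in simp)
    moreover have "m3 (BB I + 5) = real i" "m3 (BB I + 6) = real j" "m3 (BB I + 7) = real k" "m3 (BB I + 8) = real v"
      using r2 unfolding m3_def by simp_all
    ultimately show ?thesis using s(2)
      apply (intro exI[of _ "Suc 0 + (c2 + Suc 0 + 1)"] exI[of _ m3])
      by (intro conjI; (assumption | linarith))
  next
    case False
    define m3 where "m3 = m1(BB I + 32 + ix (NN I) i j k v := V ob I i j k v)"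
    have vv: "V ob I i j k v = 0" using False by (simp add: V_eq)
    have run3: "run (Store (idxE 5 6 7 8) (Const 0)) m1 = Some (Suc 0, m3)"
      using r1 vv unfolding m3_def idxE_def ix_def
      by (simp del: of_nat_add of_nat_mult of_nat_Suc add: evs)
    have "run (LB ob) m = Some (Suc 0 + (Suc 0 + 1), m3)"
      unfolding LB_def
      by (rule run_Seq[OF run1], rule run_IfF)
         (use r1 False in \<open>simp del: of_nat_add of_nat_mult of_nat_Suc add: evs\<close>, rule run3)
    moreover have "Base I m3" by (rule base_unch[OF B1, of m3 "{BB I + 32 + ix (NN I) i j k v}"]) (auto simp: unch_def m3_def)
    moreover have "TabOK ob I m3 (ix (NN I) i j k v)" unfolding m3_def by (rule tab_store[OF T1 b])
    moreover have "m3 (BB I + 5) = real i" "m3 (BB I + 6) = real j" "m3 (BB I + 7) = real k" "m3 (BB I + 8) = real v"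
      using r1 unfolding m3_def by simp_all
    ultimately show ?thesis
      apply (intro exI[of _ "Suc 0 + (Suc 0 + 1)"] exI[of _ m3])
      by (intro conjI; (assumption | simp))
  qed
qed


definition FOR :: "int \<Rightarrow> com \<Rightarrow> com" where
  "FOR r c = Seq (st r (rd 3)) (While (Less (Const 0) (rd r)) c)"

lemma for_loop:
  assumes reg: "\<And>v m. Q v m \<Longrightarrow> m 2 = real (BB I) \<and> m (BB I + 3) = real (NN I)"
    and upd: "\<And>v m x. Q v m \<Longrightarrow> Q v (m(BB I + r := x))"
    and body: "\<And>v m. v < NN I \<Longrightarrow> Q (Suc v) m \<Longrightarrow> m (BB I + r) = real (Suc v) \<Longrightarrow>
        (\<exists>k m'. exec c m k m' \<and> k \<le> K \<and> Q v m' \<and> m' (BB I + r) = real v)"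
    and q: "Q (NN I) m"
  shows "\<exists>k m'. exec (FOR (int r) c) m k m' \<and> k \<le> NN I * (K + 1) + 2 \<and> Q 0 m'"
proof -
  define m0 where "m0 = m(BB I + r := real (NN I))"
  have rr: "m 2 = real (BB I)" "m (BB I + 3) = real (NN I)" using reg[OF q] by auto
  have run0: "run (st (int r) (rd 3)) m = Some (Suc 0, m0)" using rr unfolding m0_def
    by (simp del: of_nat_add of_nat_mult of_nat_Suc add: evs)
  have q0: "Q (NN I) m0" unfolding m0_def by (rule upd[OF q])
  have r0: "m0 (BB I + r) = real (NN I)" unfolding m0_def by simp
  define P where "P t m' \<longleftrightarrow> Q (NN I - t) m' \<and> m' (BB I + r) = real (NN I - t)" for t m'
  have w: "\<exists>k m'. exec (While (Less (Const 0) (rd (int r))) c) m0 k m' \<and> k \<le> NN I*(K+1)+1 \<and> P (NN I) m'"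
  proof (rule while_rule[where P = P])
    fix t m1 assume t: "t < NN I" and p: "P t m1"
    have q1: "Q (Suc (NN I - Suc t)) m1" "m1 (BB I + r) = real (Suc (NN I - Suc t))"
      using p t unfolding P_def by (simp_all add: Suc_diff_Suc)
    have rr1: "m1 2 = real (BB I)" using reg[OF q1(1)] by auto
    have "beval (Less (Const 0) (rd (int r))) m1 = Some True" using rr1 q1(2)
      by (simp del: of_nat_add of_nat_mult of_nat_Suc add: evs)
    moreover obtain k m' where "exec c m1 k m'" "k \<le> K" "Q (NN I - Suc t) m'" "m' (BB I + r) = real (NN I - Suc t)"
      using body[OF _ q1] t by auto
    ultimately show "beval (Less (Const 0) (rd (int r))) m1 = Some True \<and> (\<exists>k m'. exec c m1 k m' \<and> k \<le> K \<and> P (Suc t) m')"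
      unfolding P_def by auto
  next
    fix m1 assume p: "P (NN I) m1"
    then have "m1 (BB I + r) = 0" "m1 2 = real (BB I)" using reg unfolding P_def by auto
    then show "beval (Less (Const 0) (rd (int r))) m1 = Some False"
      by (simp del: of_nat_add of_nat_mult of_nat_Suc add: evs)
  next
    show "P 0 m0" unfolding P_def using q0 r0 by simp
  qed
  then obtain k m' where ew: "exec (While (Less (Const 0) (rd (int r))) c) m0 k m'" and kb: "k \<le> NN I*(K+1)+1"
    and pn: "P (NN I) m'" by blast
  have e0: "exec (st (int r) (rd 3)) m (Suc 0) m0" by (rule run_exec[OF run0])
  have "exec (FOR (int r) c) m (Suc 0 + k) m'" unfolding FOR_def by (rule exec.ExSeq[OF e0 ew])
  moreover have "Suc 0 + k \<le> NN I * (K + 1) + 2" using kb by simp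
  moreover have "Q 0 m'" using pn unfolding P_def by simp
  ultimately show ?thesis by blast
qed

definition LL :: "objective \<Rightarrow> com" where "LL ob = FOR 8 (LB ob)"
definition KB :: "objective \<Rightarrow> com" where "KB ob = Seq (st 7 (Sub (rd 7) (Const 1))) (LL ob)"
definition KL :: "objective \<Rightarrow> com" where "KL ob = FOR 7 (KB ob)"
definition JB :: "objective \<Rightarrow> com" where "JB ob = Seq (st 6 (Sub (rd 6) (Const 1))) (KL ob)"
definition JL :: "objective \<Rightarrow> com" where "JL ob = FOR 6 (JB ob)"
definition IB :: "objective \<Rightarrow> com" where "IB ob = Seq (st 5 (Sub (rd 5) (Const 1))) (JL ob)"
definition IL :: "objective \<Rightarrow> com" where "IL ob = FOR 5 (IB ob)"

definition QL where "QL ob I i j k v m \<longleftrightarrow> Base I m \<and> m (BB I + 5) = real i \<and> m (BB I + 6) = real j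
   \<and> m (BB I + 7) = real k \<and> TabOK ob I m (ix (NN I) i j k v)"
definition QK where "QK ob I i j v m \<longleftrightarrow> Base I m \<and> m (BB I + 5) = real i \<and> m (BB I + 6) = real j
   \<and> TabOK ob I m (ix (NN I) i j v 0)"
definition QJ where "QJ ob I i v m \<longleftrightarrow> Base I m \<and> m (BB I + 5) = real i \<and> TabOK ob I m (ix (NN I) i v 0 0)"
definition QI where "QI ob I v m \<longleftrightarrow> Base I m \<and> TabOK ob I m (ix (NN I) v 0 0 0)"

lemma base_regs: "Base I m \<Longrightarrow> m 2 = real (BB I) \<and> m (BB I + 3) = real (NN I)"
  unfolding Base_def by simp

lemma base_upd: "Base I m \<Longrightarrow> 5 \<le> r \<Longrightarrow> r \<noteq> 23 \<Longrightarrow> Base I (m(BB I + r := x))"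
  by (rule base_unch[of I m _ "{BB I + r}"]) (auto simp: unch_def)

lemma tab_upd: "TabOK ob I m lo \<Longrightarrow> r < 32 \<Longrightarrow> TabOK ob I (m(BB I + r := x)) lo"
  by (rule tab_unch[of ob I m lo _ "{BB I + r}"]) (auto simp: unch_def)

lemma ix_N: "ix N i j k N = ix N i j (Suc k) 0" "ix N i j N 0 = ix N i (Suc j) 0 0" "ix N i N 0 0 = ix N (Suc i) 0 0 0"
  by (simp_all add: ix_def algebra_simps)

lemma ll_spec:
  assumes b: "i < NN I" "j < NN I" "k < NN I" and q: "QL ob I i j k (NN I) m"
  shows "\<exists>c m'. exec (LL ob) m c m' \<and> c \<le> NN I * 101 + 2 \<and> QL ob I i j k 0 m'"
proof -
  have "\<exists>c m'. exec (FOR (int 8) (LB ob)) m c m' \<and> c \<le> NN I * (100 + 1) + 2 \<and> QL ob I i j k 0 m'"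
  proof (rule for_loop[where Q = "QL ob I i j k"])
    fix v m1 assume "QL ob I i j k v m1"
    then show "m1 2 = real (BB I) \<and> m1 (BB I + 3) = real (NN I)" unfolding QL_def using base_regs by blast
  next
    fix v m1 x assume "QL ob I i j k v m1"
    then show "QL ob I i j k v (m1(BB I + 8 := x))" unfolding QL_def
      using base_upd[of I m1 8 x] tab_upd[of ob I m1 _ 8 x] by simp
  next
    fix v m1 assume v: "v < NN I" and qq: "QL ob I i j k (Suc v) m1" and r8: "m1 (BB I + 8) = real (Suc v)"
    have qq': "Base I m1" "m1 (BB I + 5) = real i" "m1 (BB I + 6) = real j" "m1 (BB I + 7) = real k"
      "TabOK ob I m1 (ix (NN I) i j k (Suc v))" using qq unfolding QL_def by auto
    obtain c m' where h: "run (LB ob) m1 = Some (c, m')" "c \<le> 100" "Base I m'"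
      "m' (BB I + 5) = real i" "m' (BB I + 6) = real j" "m' (BB I + 7) = real k" "m' (BB I + 8) = real v"
      "TabOK ob I m' (ix (NN I) i j k v)"
      using lb_spec[OF qq'(1-4) r8 b v qq'(5)] by blast
    show "\<exists>c m'. exec (LB ob) m1 c m' \<and> c \<le> 100 \<and> QL ob I i j k v m' \<and> m' (BB I + 8) = real v"
      using run_exec[OF h(1)] h(2-) unfolding QL_def by blast
  next
    show "QL ob I i j k (NN I) m" by (rule q)
  qed
  then show ?thesis unfolding LL_def by simp
qed


lemma dec_run:
  assumes "m 2 = real (BB I)" "m (BB I + r) = real (Suc v)"
  shows "run (st (int r) (Sub (rd (int r)) (Const 1))) m = Some (Suc 0, m(BB I + r := real v))"
  using assms by (simp del: of_nat_add of_nat_mult of_nat_Suc add: evs rn_sub_one)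

lemma kb_spec:
  assumes b: "i < NN I" "j < NN I" "v < NN I" and q: "QK ob I i j (Suc v) m" and r: "m (BB I + 7) = real (Suc v)"
  shows "\<exists>c m'. exec (KB ob) m c m' \<and> c \<le> NN I * 101 + 3 \<and> QK ob I i j v m' \<and> m' (BB I + 7) = real v"
proof -
  have B: "Base I m" "m (BB I + 5) = real i" "m (BB I + 6) = real j" "TabOK ob I m (ix (NN I) i j (Suc v) 0)"
    using q unfolding QK_def by auto
  have e1: "exec (st 7 (Sub (rd 7) (Const 1))) m (Suc 0) (m(BB I + 7 := real v))"
    using run_exec[OF dec_run[of m I 7 v]] base_regs[OF B(1)] r by simp
  have q1: "QL ob I i j v (NN I) (m(BB I + 7 := real v))"
    unfolding QL_def using base_upd[OF B(1), of 7] tab_upd[OF B(4), of 7] B(2,3) ix_N(1) by simp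
  obtain c m' where h: "exec (LL ob) (m(BB I + 7 := real v)) c m'" "c \<le> NN I * 101 + 2" "QL ob I i j v 0 m'"
    using ll_spec[OF b q1] by blast
  have "exec (KB ob) m (Suc 0 + c) m'" unfolding KB_def by (rule exec.ExSeq[OF e1 h(1)])
  moreover have "QK ob I i j v m'" "m' (BB I + 7) = real v" using h(3) unfolding QL_def QK_def by auto
  ultimately show ?thesis using h(2) by (intro exI[of _ "Suc 0 + c"] exI[of _ m']) auto
qed

lemma kl_spec:
  assumes b: "i < NN I" "j < NN I" and q: "QK ob I i j (NN I) m"
  shows "\<exists>c m'. exec (KL ob) m c m' \<and> c \<le> NN I * (NN I * 101 + 4) + 2 \<and> QK ob I i j 0 m'"
proof -
  have "\<exists>c m'. exec (FOR (int 7) (KB ob)) m c m' \<and> c \<le> NN I * (NN I * 101 + 3 + 1) + 2 \<and> QK ob I i j 0 m'"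
  proof (rule for_loop[where Q = "QK ob I i j"])
    fix v m1 assume "QK ob I i j v m1"
    then show "m1 2 = real (BB I) \<and> m1 (BB I + 3) = real (NN I)" unfolding QK_def using base_regs by blast
  next
    fix v m1 x assume "QK ob I i j v m1"
    then show "QK ob I i j v (m1(BB I + 7 := x))" unfolding QK_def
      using base_upd[of I m1 7 x] tab_upd[of ob I m1 _ 7 x] by simp
  next
    fix v m1 assume v: "v < NN I" and qq: "QK ob I i j (Suc v) m1" and r: "m1 (BB I + 7) = real (Suc v)"
    show "\<exists>c m'. exec (KB ob) m1 c m' \<and> c \<le> NN I * 101 + 3 \<and> QK ob I i j v m' \<and> m' (BB I + 7) = real v"
      by (rule kb_spec[OF b v qq r])
  next
    show "QK ob I i j (NN I) m" by (rule q)
  qed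
  then show ?thesis unfolding KL_def by (simp add: add.commute)
qed

lemma jb_spec:
  assumes b: "i < NN I" "v < NN I" and q: "QJ ob I i (Suc v) m" and r: "m (BB I + 6) = real (Suc v)"
  shows "\<exists>c m'. exec (JB ob) m c m' \<and> c \<le> NN I * (NN I * 101 + 4) + 3 \<and> QJ ob I i v m' \<and> m' (BB I + 6) = real v"
proof -
  have B: "Base I m" "m (BB I + 5) = real i" "TabOK ob I m (ix (NN I) i (Suc v) 0 0)"
    using q unfolding QJ_def by auto
  have e1: "exec (st 6 (Sub (rd 6) (Const 1))) m (Suc 0) (m(BB I + 6 := real v))"
    using run_exec[OF dec_run[of m I 6 v]] base_regs[OF B(1)] r by simp
  have q1: "QK ob I i v (NN I) (m(BB I + 6 := real v))"
    unfolding QK_def using base_upd[OF B(1), of 6] tab_upd[OF B(3), of 6] B(2) ix_N(2) by simp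
  obtain c m' where h: "exec (KL ob) (m(BB I + 6 := real v)) c m'" "c \<le> NN I * (NN I * 101 + 4) + 2" "QK ob I i v 0 m'"
    using kl_spec[OF b q1] by blast
  have "exec (JB ob) m (Suc 0 + c) m'" unfolding JB_def by (rule exec.ExSeq[OF e1 h(1)])
  moreover have "QJ ob I i v m'" "m' (BB I + 6) = real v" using h(3) unfolding QK_def QJ_def by auto
  ultimately show ?thesis using h(2) by (intro exI[of _ "Suc 0 + c"] exI[of _ m']) auto
qed

lemma jl_spec:
  assumes b: "i < NN I" and q: "QJ ob I i (NN I) m"
  shows "\<exists>c m'. exec (JL ob) m c m' \<and> c \<le> NN I * (NN I * (NN I * 101 + 4) + 4) + 2 \<and> QJ ob I i 0 m'"
proof -
  have "\<exists>c m'. exec (FOR (int 6) (JB ob)) m c m' \<and> c \<le> NN I * (NN I * (NN I * 101 + 4) + 3 + 1) + 2 \<and> QJ ob I i 0 m'"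
  proof (rule for_loop[where Q = "QJ ob I i"])
    fix v m1 assume "QJ ob I i v m1"
    then show "m1 2 = real (BB I) \<and> m1 (BB I + 3) = real (NN I)" unfolding QJ_def using base_regs by blast
  next
    fix v m1 x assume "QJ ob I i v m1"
    then show "QJ ob I i v (m1(BB I + 6 := x))" unfolding QJ_def
      using base_upd[of I m1 6 x] tab_upd[of ob I m1 _ 6 x] by simp
  next
    fix v m1 assume v: "v < NN I" and qq: "QJ ob I i (Suc v) m1" and r: "m1 (BB I + 6) = real (Suc v)"
    show "\<exists>c m'. exec (JB ob) m1 c m' \<and> c \<le> NN I * (NN I * 101 + 4) + 3 \<and> QJ ob I i v m' \<and> m' (BB I + 6) = real v"
      by (rule jb_spec[OF b v qq r])
  next
    show "QJ ob I i (NN I) m" by (rule q)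
  qed
  then show ?thesis unfolding JL_def by (simp add: add.commute)
qed

lemma ib_spec:
  assumes b: "v < NN I" and q: "QI ob I (Suc v) m" and r: "m (BB I + 5) = real (Suc v)"
  shows "\<exists>c m'. exec (IB ob) m c m' \<and> c \<le> NN I * (NN I * (NN I * 101 + 4) + 4) + 3 \<and> QI ob I v m' \<and> m' (BB I + 5) = real v"
proof -
  have B: "Base I m" "TabOK ob I m (ix (NN I) (Suc v) 0 0 0)"
    using q unfolding QI_def by auto
  have e1: "exec (st 5 (Sub (rd 5) (Const 1))) m (Suc 0) (m(BB I + 5 := real v))"
    using run_exec[OF dec_run[of m I 5 v]] base_regs[OF B(1)] r by simp
  have q1: "QJ ob I v (NN I) (m(BB I + 5 := real v))"
    unfolding QJ_def using base_upd[OF B(1), of 5] tab_upd[OF B(2), of 5] ix_N(3) by simp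
  obtain c m' where h: "exec (JL ob) (m(BB I + 5 := real v)) c m'" "c \<le> NN I * (NN I * (NN I * 101 + 4) + 4) + 2" "QJ ob I v 0 m'"
    using jl_spec[OF b q1] by blast
  have "exec (IB ob) m (Suc 0 + c) m'" unfolding IB_def by (rule exec.ExSeq[OF e1 h(1)])
  moreover have "QI ob I v m'" "m' (BB I + 5) = real v" using h(3) unfolding QJ_def QI_def by auto
  ultimately show ?thesis using h(2) by (intro exI[of _ "Suc 0 + c"] exI[of _ m']) auto
qed

lemma il_spec:
  assumes q: "QI ob I (NN I) m"
  shows "\<exists>c m'. exec (IL ob) m c m' \<and> c \<le> NN I * (NN I * (NN I * (NN I * 101 + 4) + 4) + 4) + 2 \<and> QI ob I 0 m'"
proof -
  have "\<exists>c m'. exec (FOR (int 5) (IB ob)) m c m' \<and> c \<le> NN I * (NN I * (NN I * (NN I * 101 + 4) + 4) + 3 + 1) + 2 \<and> QI ob I 0 m'"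
  proof (rule for_loop[where Q = "QI ob I"])
    fix v m1 assume "QI ob I v m1"
    then show "m1 2 = real (BB I) \<and> m1 (BB I + 3) = real (NN I)" unfolding QI_def using base_regs by blast
  next
    fix v m1 x assume "QI ob I v m1"
    then show "QI ob I v (m1(BB I + 5 := x))" unfolding QI_def
      using base_upd[of I m1 5 x] tab_upd[of ob I m1 _ 5 x] by simp
  next
    fix v m1 assume v: "v < NN I" and qq: "QI ob I (Suc v) m1" and r: "m1 (BB I + 5) = real (Suc v)"
    show "\<exists>c m'. exec (IB ob) m1 c m' \<and> c \<le> NN I * (NN I * (NN I * 101 + 4) + 4) + 3 \<and> QI ob I v m' \<and> m' (BB I + 5) = real v"
      by (rule ib_spec[OF v qq r])
  next
    show "QI ob I (NN I) m" by (rule q)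
  qed
  then show ?thesis unfolding IL_def by (simp add: add.commute)
qed

definition stepst :: "objective \<Rightarrow> inst \<Rightarrow> nat \<times> nat \<times> nat \<times> nat \<Rightarrow> nat \<times> nat \<times> nat \<times> nat" where
  "stepst ob I s = (case s of (i, j, k, l) \<Rightarrow>
     (if chn ob I i j k l = 2 then (i, j+1, fst (nxt I (n1 I+j+1) k l), snd (nxt I (n1 I+j+1) k l))
      else (i+1, j, fst (nxt I (i+1) k l), snd (nxt I (i+1) k l))))"

definition jobAt :: "objective \<Rightarrow> inst \<Rightarrow> nat \<times> nat \<times> nat \<times> nat \<Rightarrow> job" where
  "jobAt ob I s = (case s of (i, j, k, l) \<Rightarrow> (if chn ob I i j k l = 2 then J2 j else J1 i))"

lemma gen_nil: "chn ob I i j k l = 0 \<Longrightarrow> gen ob I i j k l = []"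
  by (subst gen.simps) (auto simp: chn_def split: if_splits)

lemma gen_cons: "chn ob I i j k l \<noteq> 0 \<Longrightarrow> gen ob I i j k l = jobAt ob I (i,j,k,l) # (case stepst ob I (i,j,k,l) of (i',j',k',l') \<Rightarrow> gen ob I i' j' k' l')"
  by (subst gen.simps) (auto simp: chn_def jobAt_def stepst_def prod.case_eq_if split: if_splits)

lemma gen_nth: "q < length (gen ob I i j k l) \<Longrightarrow> gen ob I i j k l ! q = jobAt ob I ((stepst ob I ^^ q) (i,j,k,l))"
proof (induction q arbitrary: i j k l)
  case 0
  then have "chn ob I i j k l \<noteq> 0" using gen_nil by fastforce
  then show ?case using gen_cons by simp
next
  case (Suc q)
  then have c: "chn ob I i j k l \<noteq> 0" using gen_nil by fastforce
  obtain i' j' k' l' where s: "stepst ob I (i,j,k,l) = (i',j',k',l')" by (cases "stepst ob I (i,j,k,l)") auto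
  have g: "gen ob I i j k l = jobAt ob I (i,j,k,l) # gen ob I i' j' k' l'" using gen_cons[OF c] s by simp
  have "q < length (gen ob I i' j' k' l')" using Suc.prems g by simp
  then have "gen ob I i' j' k' l' ! q = jobAt ob I ((stepst ob I ^^ q) (i',j',k',l'))" by (rule Suc.IH)
  then show ?case using g s by (simp del: funpow.simps add: funpow_Suc_right)
qed

lemma length_gen: "length (gen ob I 0 0 0 0) = n1 I + n2 I"
proof -
  have v: "vsuf I 0 0 (gen ob I 0 0 0 0)" using upper[of 0 0 0 I ob 0] by simp
  have "length (gen ob I 0 0 0 0) = length (filter isJ1 (gen ob I 0 0 0 0)) + length (filter (Not \<circ> isJ1) (gen ob I 0 0 0 0))"
    by (simp add: sum_length_filter_compl[symmetric] comp_def)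
  then show ?thesis using v unfolding vsuf_def by simp
qed

definition winv :: "inst \<Rightarrow> nat \<Rightarrow> nat \<times> nat \<times> nat \<times> nat \<Rightarrow> bool" where
  "winv I t s = (case s of (i, j, k, l) \<Rightarrow> i + j = t \<and> i \<le> n1 I \<and> j \<le> n2 I \<and> l \<le> i + j \<and> k < NN I)"

lemma chn_nz: "i + j < n1 I + n2 I \<Longrightarrow> chn ob I i j k l \<noteq> 0"
  by (auto simp: chn_def)

lemma chn_cases: "chn ob I i j k l = 2 \<Longrightarrow> j < n2 I" "chn ob I i j k l = 1 \<Longrightarrow> i < n1 I"
  "chn ob I i j k l \<noteq> 0 \<Longrightarrow> chn ob I i j k l = 1 \<or> chn ob I i j k l = 2"
  by (auto simp: chn_def split: if_splits)

lemma winv_step: assumes "winv I t s" "t < n1 I + n2 I" shows "winv I (Suc t) (stepst ob I s)"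
proof -
  obtain i j k l where s: "s = (i,j,k,l)" by (cases s) auto
  have h: "i + j = t" "i \<le> n1 I" "j \<le> n2 I" "l \<le> i + j" "k < NN I" using assms(1) s by (auto simp: winv_def)
  have c: "chn ob I i j k l \<noteq> 0" using chn_nz h(1) assms(2) by blast
  show ?thesis
  proof (cases "chn ob I i j k l = 2")
    case True
    have "j < n2 I" using chn_cases(1)[OF True] .
    then show ?thesis using True h s snd_nxt[of I "n1 I+j+1" k l]
      by (auto simp: winv_def stepst_def nxt_def NN_def)
  next
    case False
    then have "chn ob I i j k l = 1" using chn_cases(3)[OF c] by simp
    then have "i < n1 I" using chn_cases(2) by blast
    then show ?thesis using False h s snd_nxt[of I "i+1" k l]
      by (auto simp: winv_def stepst_def nxt_def NN_def)
  qed
qed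

lemma winv_walk: "t \<le> n1 I + n2 I \<Longrightarrow> winv I t ((stepst ob I ^^ t) (0,0,0,0))"
proof (induction t)
  case 0
  then show ?case by (simp add: winv_def NN_def)
next
  case (Suc t)
  then show ?case using winv_step by simp
qed


definition Bx :: expr where "Bx = Add (Const 3) (Mul (Const 3) (Add (Ld (Const 0)) (Ld (Const 1))))"

definition SETUP :: com where
  "SETUP = Seq (Store (Add Bx (Const 0)) (Ld (Const 0))) (Seq (Store (Add Bx (Const 1)) (Ld (Const 1)))
     (Seq (Store (Add Bx (Const 2)) (Ld (Const 2)))
     (Seq (Store (Add Bx (Const 3)) (Add (Add (Ld (Const 0)) (Ld (Const 1))) (Const 1)))
     (Seq (Store (Add Bx (Const 4)) (Add (Ld (Const 0)) (Ld (Const 1))))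
     (Seq (Store (Const 2) Bx)
       (st 23 (Add (Add (Ld (Const 2)) (Const 32)) (Mul (Mul (Mul (rd 3) (rd 3)) (rd 3)) (rd 3)))))))))"

lemma inp012: "input_mem I 0 = real (n1 I)" "input_mem I 1 = real (n2 I)" "input_mem I 2 = pt I"
  by (simp_all add: input_mem_def)

lemma ix_lt: assumes "i < N" "j < N" "k < N" "l < N" shows "ix N i j k l < ix N N 0 0 0"
proof -
  have "ix N i j k l < ix N (i+1) 0 0 0" using ix_succ1[OF assms(2-4)] .
  also have "\<dots> \<le> ix N N 0 0 0"
  proof -
    have "(i+1) * (N*N*N) \<le> N * (N*N*N)" using assms(1) by (intro mult_le_mono1) simp
    then show ?thesis by (simp only: ix_def add_0_right mult.assoc)
  qed
  finally show ?thesis .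
qed

lemma setup_spec: "\<exists>c m'. run SETUP (input_mem I) = Some (c, m') \<and> c \<le> 7 \<and> QI ob I (NN I) m'"
proof -
  define M where "M = (input_mem I)(BB I := real (n1 I), BB I + 1 := real (n2 I), BB I + 2 := pt I,
     BB I + 3 := real (NN I), BB I + 4 := real (n1 I + n2 I), 2 := real (BB I),
     BB I + 23 := real (BB I + 32 + NN I ^ 4))"
  have b: "BB I = 3 + 3 * (n1 I + n2 I)" "NN I = n1 I + n2 I + 1" by (simp_all add: BB_def NN_def)
  have r: "run SETUP (input_mem I) = Some (Suc (Suc (Suc (Suc (Suc (Suc (Suc 0)))))), M)"
    unfolding SETUP_def Bx_def M_def using inp012[of I]
    by (simp del: of_nat_add of_nat_mult of_nat_Suc add: evs b power4_eq_xxxx)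
  have B3: "3 \<le> BB I" by (rule BB3)
  have base: "Base I M" unfolding Base_def M_def using B3 by (auto simp: inp012)
  have tab: "TabOK ob I M (ix (NN I) (NN I) 0 0 0)" unfolding TabOK_def using ix_lt
    by (meson leD)
  show ?thesis using r base tab unfolding QI_def by (intro exI[of _ "Suc (Suc (Suc (Suc (Suc (Suc (Suc 0))))))"] exI[of _ M]) simp
qed


definition OBa :: "inst \<Rightarrow> nat" where "OBa I = BB I + 32 + NN I ^ 4"

lemma ix_lt4: "i < NN I \<Longrightarrow> j < NN I \<Longrightarrow> k < NN I \<Longrightarrow> l < NN I \<Longrightarrow> BB I + 32 + ix (NN I) i j k l < OBa I"
proof -
  assume a: "i < NN I" "j < NN I" "k < NN I" "l < NN I"
  have "ix (NN I) i j k l < ix (NN I) (NN I) 0 0 0" by (rule ix_lt[OF a])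
  moreover have "ix (NN I) (NN I) 0 0 0 = NN I ^ 4" by (simp add: ix_def power4_eq_xxxx)
  ultimately show ?thesis unfolding OBa_def by simp
qed

lemma tab_unch_hi: assumes "TabOK ob I m lo" "unch m m' A" "\<forall>a\<in>A. OBa I \<le> a" shows "TabOK ob I m' lo"
  unfolding TabOK_def
proof (intro allI impI)
  fix i j k l
  assume h: "i < NN I" "j < NN I" "k < NN I" "l < NN I" "lo \<le> ix (NN I) i j k l"
  have "BB I + 32 + ix (NN I) i j k l \<notin> A" using assms(3) ix_lt4[OF h(1-4)] by force
  then have "m' (BB I + 32 + ix (NN I) i j k l) = m (BB I + 32 + ix (NN I) i j k l)"
    using assms(2) unfolding unch_def by blast
  then show "m' (BB I + 32 + ix (NN I) i j k l) = V ob I i j k l" using assms(1) h unfolding TabOK_def by simp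
qed

definition WR :: com where
  "WR = If (Eq (rd 11) (Const 1))
     (Seq (Store (Add (rd 23) (rd 21)) (Add (rd 5) (Const 1))) (st 5 (Add (rd 5) (Const 1))))
     (Seq (Store (Add (rd 23) (rd 21)) (Sub (Const 0) (Add (rd 6) (Const 1)))) (st 6 (Add (rd 6) (Const 1))))"

definition RB :: "objective \<Rightarrow> com" where
  "RB ob = Seq (STEP ob) (Seq WR (Seq (st 7 (rd 12)) (Seq (st 8 (rd 13)) (st 21 (Add (rd 21) (Const 1))))))"

abbreviation walk :: "objective \<Rightarrow> inst \<Rightarrow> nat \<Rightarrow> nat \<times> nat \<times> nat \<times> nat" where
  "walk ob I t \<equiv> (stepst ob I ^^ t) (0,0,0,0)"

definition RI :: "objective \<Rightarrow> inst \<Rightarrow> nat \<Rightarrow> mem \<Rightarrow> bool" where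
  "RI ob I t m \<longleftrightarrow> Base I m \<and> TabOK ob I m 0 \<and>
     (case walk ob I t of (i, j, k, l) \<Rightarrow> m (BB I + 5) = real i \<and> m (BB I + 6) = real j \<and> m (BB I + 7) = real k \<and> m (BB I + 8) = real l)
     \<and> m (BB I + 21) = real t
     \<and> (\<forall>q<t. m (OBa I + q) = enc_job (jobAt ob I (walk ob I q)))"

lemma rb_spec:
  assumes t: "t < n1 I + n2 I" and ri: "RI ob I t m"
  shows "\<exists>c m'. run (RB ob) m = Some (c, m') \<and> c \<le> 100 \<and> RI ob I (Suc t) m'"
proof -
  obtain i j k l where w: "walk ob I t = (i,j,k,l)" by (cases "walk ob I t") auto
  have wi: "i + j = t" "i \<le> n1 I" "j \<le> n2 I" "l \<le> i + j" "k < NN I"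
    using winv_walk[of t I ob] t w by (auto simp: winv_def)
  have B: "Base I m" and T: "TabOK ob I m 0" and r: "m (BB I + 5) = real i" "m (BB I + 6) = real j" "m (BB I + 7) = real k" "m (BB I + 8) = real l"
    and r21: "m (BB I + 21) = real t" and buf: "\<forall>q<t. m (OBa I + q) = enc_job (jobAt ob I (walk ob I q))"
    using ri w unfolding RI_def by auto
  have b: "i < NN I" "j < NN I" "k < NN I" "l + 1 < NN I" using wi t by (auto simp: NN_def)
  have c0: "chn ob I i j k l \<noteq> 0" using chn_nz wi(1) t by blast
  obtain c1 m1 where s: "run (STEP ob) m = Some (c1, m1)" "c1 \<le> 90" "unch m m1 (insert (BB I + 9) (Scr I))"
    "m1 (BB I + 11) = real (chn ob I i j k l)"
    "m1 (BB I + 12) = real (fst (nxt I (ckx ob I i j k l) k l))" "m1 (BB I + 13) = real (snd (nxt I (ckx ob I i j k l) k l))"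
    using step_spec[OF B r b T] c0 by auto
  have sB: "\<forall>a\<in>insert (BB I + 9) (Scr I). BB I + 5 \<le> a \<and> a \<noteq> BB I + 23" "\<forall>a\<in>insert (BB I + 9) (Scr I). a < BB I + 32"
    unfolding Scr_def by auto
  have B1: "Base I m1" by (rule base_unch[OF B s(3) sB(1)])
  have T1: "TabOK ob I m1 0" by (rule tab_unch[OF T s(3) sB(2)])
  have nS: "\<And>a. a \<notin> insert (BB I + 9) (Scr I) \<Longrightarrow> m1 a = m a" using s(3) unfolding unch_def by blast
  have inS: "BB I + 5 \<notin> insert (BB I + 9) (Scr I)" "BB I + 6 \<notin> insert (BB I + 9) (Scr I)" "BB I + 21 \<notin> insert (BB I + 9) (Scr I)"
    unfolding Scr_def by auto
  have r1: "m1 (BB I + 5) = real i" "m1 (BB I + 6) = real j" "m1 (BB I + 21) = real t"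
    using nS[OF inS(1)] nS[OF inS(2)] nS[OF inS(3)] r r21 by simp_all
  have bb: "m1 2 = real (BB I)" "m1 (BB I + 23) = real (OBa I)" using B1 unfolding Base_def OBa_def by simp_all
  have buf1: "\<forall>q<t. m1 (OBa I + q) = enc_job (jobAt ob I (walk ob I q))"
  proof (intro allI impI)
    fix q assume "q < t"
    have "OBa I + q \<notin> insert (BB I + 9) (Scr I)" unfolding Scr_def OBa_def by auto
    then show "m1 (OBa I + q) = enc_job (jobAt ob I (walk ob I q))" using nS buf \<open>q < t\<close> by simp
  qed
  define i' j' where "i' = (if chn ob I i j k l = 2 then i else i + 1)" and "j' = (if chn ob I i j k l = 2 then j + 1 else j)"
  define k' l' where "k' = fst (nxt I (ckx ob I i j k l) k l)" and "l' = snd (nxt I (ckx ob I i j k l) k l)"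
  have st: "walk ob I (Suc t) = (i', j', k', l')"
    using w by (simp add: stepst_def i'_def j'_def k'_def l'_def ckx_def)
  have ja: "jobAt ob I (walk ob I t) = (if chn ob I i j k l = 2 then J2 j else J1 i)" using w by (simp add: jobAt_def)
  define m2 where "m2 = m1(OBa I + t := enc_job (jobAt ob I (walk ob I t)), BB I + 5 := real i', BB I + 6 := real j',
     BB I + 7 := real k', BB I + 8 := real l', BB I + 21 := real (Suc t))"
  have run2: "run (Seq WR (Seq (st 7 (rd 12)) (Seq (st 8 (rd 13)) (st 21 (Add (rd 21) (Const 1)))))) m1
      = Some (Suc (Suc (Suc (Suc (Suc (Suc 0))))), m2)"
  proof (cases "chn ob I i j k l = 2")
    case True
    show ?thesis using True bb r1 s(4-6) ja unfolding WR_def m2_def i'_def j'_def k'_def l'_def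
      apply (simp del: of_nat_add of_nat_mult of_nat_Suc add: evs OBa_def)
      apply (rule ext)
      apply (simp add: r1)
      done
  next
    case False
    then have "chn ob I i j k l = 1" using chn_cases(3)[OF c0] by simp
    then show ?thesis using False bb r1 s(4-6) ja unfolding WR_def m2_def i'_def j'_def k'_def l'_def
      apply (simp del: of_nat_add of_nat_mult of_nat_Suc add: evs OBa_def)
      apply (rule ext)
      apply (simp add: r1)
      done
  qed
  have runRB: "run (RB ob) m = Some (c1 + Suc (Suc (Suc (Suc (Suc (Suc 0))))), m2)"
    unfolding RB_def by (rule run_Seq[OF s(1) run2])
  have u2: "unch m1 m2 {OBa I + t, BB I + 5, BB I + 6, BB I + 7, BB I + 8, BB I + 21}" unfolding unch_def m2_def by simp
  have B2: "Base I m2" by (rule base_unch[OF B1 u2]) (auto simp: OBa_def)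
  have u2a: "unch m1 (m1(BB I + 5 := real i', BB I + 6 := real j', BB I + 7 := real k', BB I + 8 := real l', BB I + 21 := real (Suc t)))
     {BB I + 5, BB I + 6, BB I + 7, BB I + 8, BB I + 21}" unfolding unch_def by simp
  have T2a: "TabOK ob I (m1(BB I + 5 := real i', BB I + 6 := real j', BB I + 7 := real k', BB I + 8 := real l', BB I + 21 := real (Suc t))) 0"
    by (rule tab_unch[OF T1 u2a]) auto
  have m2eq: "m2 = (m1(BB I + 5 := real i', BB I + 6 := real j', BB I + 7 := real k', BB I + 8 := real l', BB I + 21 := real (Suc t)))
     (OBa I + t := enc_job (jobAt ob I (walk ob I t)))"
    unfolding m2_def OBa_def by (rule ext) simp
  have T2: "TabOK ob I m2 0" unfolding m2eq
    by (rule tab_unch_hi[OF T2a, of _ "{OBa I + t}"]) (auto simp: unch_def)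
  have buf2: "\<forall>q<Suc t. m2 (OBa I + q) = enc_job (jobAt ob I (walk ob I q))"
  proof (intro allI impI)
    fix q assume q: "q < Suc t"
    show "m2 (OBa I + q) = enc_job (jobAt ob I (walk ob I q))"
    proof (cases "q = t")
      case True
      then show ?thesis unfolding m2_def OBa_def by simp
    next
      case False
      then have "q < t" using q by simp
      then show ?thesis using buf1 unfolding m2_def OBa_def by simp
    qed
  qed
  have RI2: "RI ob I (Suc t) m2" unfolding RI_def using B2 T2 buf2 st by (simp add: m2_def OBa_def)
  show ?thesis using runRB s(2) RI2 by (intro exI[of _ "c1 + Suc (Suc (Suc (Suc (Suc (Suc 0)))))"] exI[of _ m2]) simp
qed

definition RINIT :: com where
  "RINIT = Seq (st 5 (Const 0)) (Seq (st 6 (Const 0)) (Seq (st 7 (Const 0)) (Seq (st 8 (Const 0)) (st 21 (Const 0)))))"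

definition REC :: "objective \<Rightarrow> com" where
  "REC ob = Seq RINIT (While (Less (rd 21) (rd 4)) (RB ob))"

lemma rec_spec:
  assumes q: "QI ob I 0 m"
  shows "\<exists>c m'. exec (REC ob) m c m' \<and> c \<le> (n1 I + n2 I) * 101 + 6 \<and> RI ob I (n1 I + n2 I) m'"
proof -
  have B: "Base I m" "TabOK ob I m 0" using q unfolding QI_def by (auto simp: ix_def)
  have bb: "m 2 = real (BB I)" using B unfolding Base_def by simp
  define m0 where "m0 = m(BB I + 5 := 0, BB I + 6 := 0, BB I + 7 := 0, BB I + 8 := 0, BB I + 21 := 0)"
  have run0: "run RINIT m = Some (Suc (Suc (Suc (Suc (Suc 0)))), m0)"
    using bb unfolding m0_def RINIT_def by (simp del: of_nat_add of_nat_mult of_nat_Suc add: evs)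
  have u0: "unch m m0 {BB I + 5, BB I + 6, BB I + 7, BB I + 8, BB I + 21}" unfolding unch_def m0_def by simp
  have B0: "Base I m0" by (rule base_unch[OF B(1) u0]) auto
  have T0: "TabOK ob I m0 0" by (rule tab_unch[OF B(2) u0]) auto
  have ri0: "RI ob I 0 m0" unfolding RI_def using B0 T0 by (simp add: m0_def)
  have w: "\<exists>k m'. exec (While (Less (rd 21) (rd 4)) (RB ob)) m0 k m' \<and> k \<le> (n1 I + n2 I)*(100+1)+1 \<and> RI ob I (n1 I + n2 I) m'"
  proof (rule while_rule[where P = "RI ob I"])
    fix t m1 assume t: "t < n1 I + n2 I" and p: "RI ob I t m1"
    have rr: "m1 2 = real (BB I)" "m1 (BB I + 4) = real (n1 I + n2 I)" "m1 (BB I + 21) = real t"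
      using p unfolding RI_def Base_def by auto
    have "beval (Less (rd 21) (rd 4)) m1 = Some True" using rr t
      by (simp del: of_nat_add of_nat_mult of_nat_Suc add: evs)
    moreover obtain c m' where "run (RB ob) m1 = Some (c, m')" "c \<le> 100" "RI ob I (Suc t) m'"
      using rb_spec[OF t p] by blast
    ultimately show "beval (Less (rd 21) (rd 4)) m1 = Some True \<and> (\<exists>k m'. exec (RB ob) m1 k m' \<and> k \<le> 100 \<and> RI ob I (Suc t) m')"
      using run_exec by blast
  next
    fix m1 assume p: "RI ob I (n1 I + n2 I) m1"
    have rr: "m1 2 = real (BB I)" "m1 (BB I + 4) = real (n1 I + n2 I)" "m1 (BB I + 21) = real (n1 I + n2 I)"
      using p unfolding RI_def Base_def by auto
    then show "beval (Less (rd 21) (rd 4)) m1 = Some False"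
      by (simp del: of_nat_add of_nat_mult of_nat_Suc add: evs)
  next
    show "RI ob I 0 m0" by (rule ri0)
  qed
  then obtain k m' where ew: "exec (While (Less (rd 21) (rd 4)) (RB ob)) m0 k m'" and kb: "k \<le> (n1 I + n2 I)*(100+1)+1"
    and ri: "RI ob I (n1 I + n2 I) m'" by blast
  have "exec (REC ob) m (Suc (Suc (Suc (Suc (Suc 0)))) + k) m'"
    unfolding REC_def by (rule exec.ExSeq[OF run_exec[OF run0] ew])
  then show ?thesis using kb ri by (intro exI[of _ "Suc (Suc (Suc (Suc (Suc 0)))) + k"] exI[of _ m']) simp
qed


definition CB :: com where
  "CB = Seq (Store (rd 25) (Ld (Add (rd 23) (rd 25)))) (st 25 (Add (rd 25) (Const 1)))"
definition FIN :: com where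
  "FIN = Seq (Store (Const 0) (Ld (rd 23))) (Seq (Store (Const 1) (Ld (Add (rd 23) (Const 1)))) (Store (Const 2) (Ld (Add (rd 23) (Const 2)))))"
definition CP :: com where
  "CP = Seq (Seq (st 25 (Const 3)) (While (Less (rd 25) (rd 4)) CB)) FIN"

definition CI :: "inst \<Rightarrow> (nat \<Rightarrow> real) \<Rightarrow> nat \<Rightarrow> mem \<Rightarrow> bool" where
  "CI I bf t m \<longleftrightarrow> m 2 = real (BB I) \<and> m (BB I + 4) = real (n1 I + n2 I) \<and> m (BB I + 23) = real (OBa I)
     \<and> m (BB I + 25) = real (3 + t) \<and> (\<forall>q < n1 I + n2 I. m (OBa I + q) = bf q)
     \<and> (\<forall>q. 3 \<le> q \<longrightarrow> q < 3 + t \<longrightarrow> m q = bf q)"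

lemma cp_spec:
  assumes r: "m 2 = real (BB I)" "m (BB I + 4) = real (n1 I + n2 I)" "m (BB I + 23) = real (OBa I)"
    and bf: "\<forall>q < n1 I + n2 I. m (OBa I + q) = bf q"
  shows "\<exists>c m'. exec CP m c m' \<and> c \<le> 3 * (n1 I + n2 I) + 6 \<and> (\<forall>q < n1 I + n2 I. m' q = bf q)"
proof -
  let ?n = "n1 I + n2 I"
  have nB: "?n < BB I" by (simp add: BB_def NN_def)
  have nO: "BB I < OBa I" by (simp add: OBa_def)
  define m0 where "m0 = m(BB I + 25 := real (3 + 0))"
  have run0: "run (st 25 (Const 3)) m = Some (Suc 0, m0)" using r unfolding m0_def
    by (simp del: of_nat_add of_nat_mult of_nat_Suc add: evs)
  have ci0: "CI I bf 0 m0" unfolding CI_def m0_def using r bf nB nO by (simp add: OBa_def)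
  have w: "\<exists>k m'. exec (While (Less (rd 25) (rd 4)) CB) m0 k m' \<and> k \<le> (?n - 3)*(2+1)+1 \<and> CI I bf (?n - 3) m'"
  proof (rule while_rule[where P = "CI I bf"])
    fix t m1 assume t: "t < ?n - 3" and p: "CI I bf t m1"
    have rr: "m1 2 = real (BB I)" "m1 (BB I + 4) = real ?n" "m1 (BB I + 23) = real (OBa I)" "m1 (BB I + 25) = real (3 + t)"
      "\<forall>q < ?n. m1 (OBa I + q) = bf q" "\<forall>q. 3 \<le> q \<longrightarrow> q < 3 + t \<longrightarrow> m1 q = bf q"
      using p unfolding CI_def by auto
    have tn: "3 + t < ?n" using t by simp
    have "beval (Less (rd 25) (rd 4)) m1 = Some True" using rr(1,2,4) tn
      by (simp del: of_nat_add of_nat_mult of_nat_Suc add: evs)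
    moreover
    define m2 where "m2 = m1(3 + t := m1 (OBa I + (3 + t)), BB I + 25 := real (3 + Suc t))"
    have tB: "t < BB I" using tn nB by simp
    have run2: "run CB m1 = Some (Suc (Suc 0), m2)" using rr(1,3,4) tB unfolding CB_def m2_def
      by (simp del: of_nat_add of_nat_mult of_nat_Suc add: evs)
    moreover have "CI I bf (Suc t) m2"
    proof -
      have nO2: "BB I + 25 < OBa I" by (simp add: OBa_def)
      have a1: "m2 2 = real (BB I)" "m2 (BB I + 4) = real ?n" "m2 (BB I + 23) = real (OBa I)" "m2 (BB I + 25) = real (3 + Suc t)"
        unfolding m2_def using rr tn nB by auto
      have a2: "\<forall>q < ?n. m2 (OBa I + q) = bf q"
      proof (intro allI impI)
        fix q assume q: "q < ?n"
        have "OBa I + q \<noteq> 3 + t" "OBa I + q \<noteq> BB I + 25" using tn nB nO nO2 by auto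
        then show "m2 (OBa I + q) = bf q" unfolding m2_def using rr(5) q by simp
      qed
      have a3: "\<forall>q. 3 \<le> q \<longrightarrow> q < 3 + Suc t \<longrightarrow> m2 q = bf q"
      proof (intro allI impI)
        fix q assume q: "3 \<le> q" "q < 3 + Suc t"
        have qB: "q \<noteq> BB I + 25" using q tn nB by auto
        show "m2 q = bf q"
        proof (cases "q = 3 + t")
          case True
          then show ?thesis unfolding m2_def using rr(5) tn qB by simp
        next
          case False
          then show ?thesis unfolding m2_def using rr(6) q qB by simp
        qed
      qed
      show ?thesis unfolding CI_def using a1 a2 a3 by blast
    qed
    ultimately show "beval (Less (rd 25) (rd 4)) m1 = Some True \<and> (\<exists>k m'. exec CB m1 k m' \<and> k \<le> 2 \<and> CI I bf (Suc t) m')"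
      using run_exec by (metis le_refl numeral_2_eq_2)
  next
    fix m1 assume p: "CI I bf (?n - 3) m1"
    have rr: "m1 2 = real (BB I)" "m1 (BB I + 4) = real ?n" "m1 (BB I + 25) = real (3 + (?n - 3))"
      using p unfolding CI_def by auto
    then show "beval (Less (rd 25) (rd 4)) m1 = Some False"
      by (simp del: of_nat_add of_nat_mult of_nat_Suc add: evs)
  next
    show "CI I bf 0 m0" by (rule ci0)
  qed
  then obtain k m1 where ew: "exec (While (Less (rd 25) (rd 4)) CB) m0 k m1" and kb: "k \<le> (?n - 3)*(2+1)+1"
    and ci: "CI I bf (?n - 3) m1" by blast
  have rr: "m1 2 = real (BB I)" "m1 (BB I + 23) = real (OBa I)"
      "\<forall>q < ?n. m1 (OBa I + q) = bf q" "\<forall>q. 3 \<le> q \<longrightarrow> q < 3 + (?n - 3) \<longrightarrow> m1 q = bf q"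
    using ci unfolding CI_def by auto
  define m2 where "m2 = m1(0 := m1 (OBa I), 1 := m1 (OBa I + 1), 2 := m1 (OBa I + 2))"
  have run2: "run FIN m1 = Some (Suc (Suc (Suc 0)), m2)" using rr(1,2) nO unfolding FIN_def m2_def
    by (simp del: of_nat_add of_nat_mult of_nat_Suc add: evs)
  have e: "exec CP m (Suc 0 + k + Suc (Suc (Suc 0))) m2" unfolding CP_def
    by (rule exec.ExSeq[OF exec.ExSeq[OF run_exec[OF run0] ew] run_exec[OF run2]])
  have res: "\<forall>q < ?n. m2 q = bf q"
  proof (intro allI impI)
    fix q assume q: "q < ?n"
    show "m2 q = bf q"
    proof (cases "q < 3")
      case True
      then have "q = 0 \<or> q = 1 \<or> q = 2" by auto
      then show ?thesis using rr(3) q unfolding m2_def by auto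
    next
      case False
      then show ?thesis using rr(4) q unfolding m2_def by auto
    qed
  qed
  have "Suc 0 + k + Suc (Suc (Suc 0)) \<le> 3 * ?n + 6" using kb by simp
  then show ?thesis using e res by blast
qed


lemma bnd: assumes "(1::nat) \<le> N" shows "N*(N*(N*(N*101+4)+4)+4)+2 + 7 + (N*101+6) + (3*N+6) \<le> 300 * N^5"
proof -
  have p1: "N ^ 1 \<le> N^4" using power_increasing[of 1 4 N] assms by linarith
  have p: "N^2 \<le> N^4" "N^3 \<le> N^4" "N^0 \<le> N^4" "N^4 \<le> N^5"
    using assms by (simp_all add: power_increasing)
  have e: "N*(N*(N*(N*101+4)+4)+4) = 101*N^4 + 4*N^3 + 4*N^2 + 4*N"
    by (simp add: algebra_simps power2_eq_square power3_eq_cube power4_eq_xxxx)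
  show ?thesis using p1 p e by simp
qed

definition PROG :: "objective \<Rightarrow> com" where
  "PROG ob = Seq SETUP (Seq (IL ob) (Seq (REC ob) CP))"

lemma prog_spec:
  "\<exists>k m'. exec (PROG ob) (input_mem I) k m' \<and> k \<le> 300 * (n1 I + n2 I + 1) ^ 5
     \<and> (\<exists>\<pi>. optimal_seq ob I \<pi> \<and> (\<forall>i < n1 I + n2 I. m' i = enc_job (\<pi> ! i)))"
proof -
  obtain c1 m1 where s1: "run SETUP (input_mem I) = Some (c1, m1)" "c1 \<le> 7" "QI ob I (NN I) m1"
    using setup_spec[of I ob] by blast
  obtain c2 m2 where s2: "exec (IL ob) m1 c2 m2" "c2 \<le> NN I * (NN I * (NN I * (NN I * 101 + 4) + 4) + 4) + 2" "QI ob I 0 m2"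
    using il_spec[OF s1(3)] by blast
  obtain c3 m3 where s3: "exec (REC ob) m2 c3 m3" "c3 \<le> (n1 I + n2 I) * 101 + 6" "RI ob I (n1 I + n2 I) m3"
    using rec_spec[OF s2(3)] by blast
  let ?\<pi> = "gen ob I 0 0 0 0"
  have B3: "Base I m3" and buf: "\<forall>q<n1 I + n2 I. m3 (OBa I + q) = enc_job (jobAt ob I (walk ob I q))"
    using s3(3) unfolding RI_def by auto
  have r3: "m3 2 = real (BB I)" "m3 (BB I + 4) = real (n1 I + n2 I)" "m3 (BB I + 23) = real (OBa I)"
    using B3 unfolding Base_def OBa_def by auto
  have bf: "\<forall>q<n1 I + n2 I. m3 (OBa I + q) = enc_job (?\<pi> ! q)"
  proof (intro allI impI)
    fix q assume q: "q < n1 I + n2 I"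
    then have "?\<pi> ! q = jobAt ob I (walk ob I q)" using gen_nth[of q ob I 0 0 0 0] length_gen[of ob I] by simp
    then show "m3 (OBa I + q) = enc_job (?\<pi> ! q)" using buf q by simp
  qed
  obtain c4 m4 where s4: "exec CP m3 c4 m4" "c4 \<le> 3 * (n1 I + n2 I) + 6" "\<forall>q < n1 I + n2 I. m4 q = enc_job (?\<pi> ! q)"
    using cp_spec[OF r3 bf] by blast
  have e: "exec (PROG ob) (input_mem I) (c1 + (c2 + (c3 + c4))) m4" unfolding PROG_def
    by (rule exec.ExSeq[OF run_exec[OF s1(1)] exec.ExSeq[OF s2(1) exec.ExSeq[OF s3(1) s4(1)]]])
  have N1: "1 \<le> NN I" by (simp add: NN_def)
  have "c1 + (c2 + (c3 + c4)) \<le> NN I * (NN I * (NN I * (NN I * 101 + 4) + 4) + 4) + 2 + 7 + (NN I * 101 + 6) + (3 * NN I + 6)"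
    using s1(2) s2(2) s3(2) s4(2) by (simp add: NN_def)
  also have "\<dots> \<le> 300 * NN I ^ 5" by (rule bnd[OF N1])
  finally have k: "c1 + (c2 + (c3 + c4)) \<le> 300 * (n1 I + n2 I + 1) ^ 5" by (simp add: NN_def)
  show ?thesis using e k s4(3) gen_optimal[of ob I] by blast
qed

theorem theorem1:
  fixes ob :: objective
  shows "\<exists>(P :: com) (c :: nat). \<forall>I :: inst. admissible I \<longrightarrow>
           (\<exists>k m'. exec P (input_mem I) k m'
              \<and> k \<le> c * (n1 I + n2 I + 1) ^ 5
              \<and> (\<exists>\<pi>. optimal_seq ob I \<pi>
                    \<and> (\<forall>i < n1 I + n2 I. m' i = enc_job (\<pi> ! i))))"
  using prog_spec[of ob] by blast

end
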